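(* Let $\mathcal{F}:(\mathcal{K},c)\to(\mathcal{K}',c')$ be a bilax functor with compatible Yang–Baxter operator, $b:A\to A$ a $c$-bimonad in $\mathcal{K}$, and $x:A\to B$ a right relative bimonad module over $b$ (right action $\lhd$, right coaction $\rho$). Then $\mathcal{F}(x)$, with right action $\mathcal{F}(\lhd)\cdot\mathcal{F}^2_{x,b}$ and right coaction $\mathcal{F}_{2;x,b}\cdot\mathcal{F}(\rho)$, is a right relative bimonad module over the $c'$-bimonad $\mathcal{F}(b)$ (with structure $\mu^{\mathcal{F}}=\mathcal{F}(\mu)\cdot\mathcal{F}^2_{b,b}$, $\eta^{\mathcal{F}}=\mathcal{F}(\eta)\cdot\mathcal{F}^0_A$, $\Delta^{\mathcal{F}}=\mathcal{F}_{2;b,b}\cdot\mathcal{F}(\Delta)$, $\varepsilon^{\mathcal{F}}=\mathcal{F}_{0;A}\cdot\mathcal{F}(\varepsilon)$).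
   Context: Conventions: $\circ$ horizontal composition, $\cdot$ vertical composition ($\beta\cdot\alpha$: first $\alpha$), $1$ identity 2-cells. A Yang–Baxter operator $c$ of a 2-category: natural 2-cells $c_{g,f}:g\circ f\Rightarrow f\circ g$ for 1-endocells of a common object, satisfying the Yang–Baxter equation $(c_{g,f}\circ1)\cdot(1\circ c_{h,f})\cdot(c_{h,g}\circ1)=(1\circ c_{h,g})\cdot(c_{h,f}\circ1)\cdot(1\circ c_{g,f})$ and $c_{\mathrm{id},f}=c_{f,\mathrm{id}}=1$. A $c$-bimonad: 1-endocell $b$ with monad $(\mu,\eta)$ and comonad $(\Delta,\varepsilon)$ such that $c_{b,b}$ is a left and right distributive law for both the monad and the comonad, and $(\mu\circ\mu)\cdot(1\circ c_{b,b}\circ1)\cdot(\Delta\circ\Delta)=\Delta\cdot\mu$, $\varepsilon\circ\varepsilon=\varepsilon\cdot\mu$, $\eta\circ\eta=\Delta\cdot\eta$, $\varepsilon\cdot\eta=1$. A bilax functor $\mathcal{F}$ is lax ($\mathcal{F}^2_{g,f}:\mathcal{F}(g)\circ\mathcal{F}(f)\Rightarrow\mathcal{F}(gf)$, $\mathcal{F}^0$) and colax ($\mathcal{F}_{2;g,f}:\mathcal{F}(gf)\Rightarrow\mathcal{F}(g)\circ\mathcal{F}(f)$, $\mathcal{F}_0$) with a Yang–Baxter operator $\nu$ which is a left and right distributive law for the lax and colax structures, satisfies the unit–counit laws, and the bilaxity conditions $(\mathcal{F}^2_{g,h}\circ\mathcal{F}^2_{f,k})\cdot(1\circ\nu_{f,h}\circ1)\cdot(\mathcal{F}_{2;g,f}\circ\mathcal{F}_{2;h,k})=\mathcal{F}_{2;gh,fk}\cdot\mathcal{F}(1\circ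 c_{f,h}\circ1)\cdot\mathcal{F}^2_{gf,hk}$ for $A\xrightarrow{k}B\xrightarrow{h}B\xrightarrow{f}B\xrightarrow{g}C$, $\mathcal{F}^0\circ\mathcal{F}^0=\mathcal{F}_{2;\mathrm{id},\mathrm{id}}\cdot\mathcal{F}^0$, $\mathcal{F}_0\circ\mathcal{F}_0=\mathcal{F}_0\cdot\mathcal{F}^2_{\mathrm{id},\mathrm{id}}$, $\mathcal{F}_0\cdot\mathcal{F}^0=1$; compatibility means $\nu_{f,g}=c'_{\mathcal{F}(f),\mathcal{F}(g)}$. A right relative bimonad module over $b$ is a 1-cell $x:A\to B$ that is a right $b$-module ($\lhd:x\circ b\Rightarrow x$, associative and unital) and a right $b$-comodule ($\rho:x\Rightarrow x\circ b$, coassociative and counital) such that $(\lhd\circ\mu)\cdot(1_x\circ c_{b,b}\circ1_b)\cdot(\rho\circ\Delta)=\rho\cdot\lhd$ as 2-cells $x\circ b\Rightarrow x\circ b$. *)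

theory Defs
  imports Main
begin

text \<open>Strict 2-categories, given by sets of objects, 1-cells and 2-cells with
source/target maps and composition operations.
  cmp1 K g f  is the 1-cell  g o f  (first f, then g);
  vcmp K b a  is the vertical composite  b . a  (first a);
  hcmp K b a  is the horizontal composite  b o a;
  idc K f     is the identity 2-cell on f;  idn1 K A the identity 1-cell on A.\<close>

record ('o, 'a, 'c) twocat =
  ob   :: "'o set"
  ar   :: "'a set"
  src1 :: "'a \<Rightarrow> 'o"
  trg1 :: "'a \<Rightarrow> 'o"
  cl   :: "'c set"
  dom2 :: "'c \<Rightarrow> 'a"
  cod2 :: "'c \<Rightarrow> 'a"
  cmp1 :: "'a \<Rightarrow> 'a \<Rightarrow> 'a"
  idn1 :: "'o \<Rightarrow> 'a"
  vcmp :: "'c \<Rightarrow> 'c \<Rightarrow> 'c"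
  hcmp :: "'c \<Rightarrow> 'c \<Rightarrow> 'c"
  idc  :: "'a \<Rightarrow> 'c"

definition arr1 :: "('o,'a,'c,'x) twocat_scheme \<Rightarrow> 'a \<Rightarrow> 'o \<Rightarrow> 'o \<Rightarrow> bool" where
  "arr1 K f A B \<longleftrightarrow> f \<in> ar K \<and> src1 K f = A \<and> trg1 K f = B \<and> A \<in> ob K \<and> B \<in> ob K"

definition cell :: "('o,'a,'c,'x) twocat_scheme \<Rightarrow> 'c \<Rightarrow> 'a \<Rightarrow> 'a \<Rightarrow> bool" where
  "cell K \<alpha> f g \<longleftrightarrow> \<alpha> \<in> cl K \<and> dom2 K \<alpha> = f \<and> cod2 K \<alpha> = g"

definition two_category :: "('o,'a,'c,'x) twocat_scheme \<Rightarrow> bool" where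
  "two_category K \<longleftrightarrow>
    (\<forall>f\<in>ar K. src1 K f \<in> ob K \<and> trg1 K f \<in> ob K) \<and>
    (\<forall>A\<in>ob K. arr1 K (idn1 K A) A A) \<and>
    (\<forall>f g A B C. arr1 K f A B \<longrightarrow> arr1 K g B C \<longrightarrow> arr1 K (cmp1 K g f) A C) \<and>
    (\<forall>f g h A B C D. arr1 K f A B \<longrightarrow> arr1 K g B C \<longrightarrow> arr1 K h C D \<longrightarrow>
        cmp1 K h (cmp1 K g f) = cmp1 K (cmp1 K h g) f) \<and>
    (\<forall>f A B. arr1 K f A B \<longrightarrow> cmp1 K f (idn1 K A) = f \<and> cmp1 K (idn1 K B) f = f) \<and>
    (\<forall>\<alpha>\<in>cl K. \<exists>A B. arr1 K (dom2 K \<alpha>) A B \<and> arr1 K (cod2 K \<alpha>) A B) \<and>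
    (\<forall>f\<in>ar K. cell K (idc K f) f f) \<and>
    (\<forall>\<alpha> \<beta> f g h. cell K \<alpha> f g \<longrightarrow> cell K \<beta> g h \<longrightarrow> cell K (vcmp K \<beta> \<alpha>) f h) \<and>
    (\<forall>\<alpha> \<beta> \<gamma> f g h k. cell K \<alpha> f g \<longrightarrow> cell K \<beta> g h \<longrightarrow> cell K \<gamma> h k \<longrightarrow>
        vcmp K \<gamma> (vcmp K \<beta> \<alpha>) = vcmp K (vcmp K \<gamma> \<beta>) \<alpha>) \<and>
    (\<forall>\<alpha> f g. cell K \<alpha> f g \<longrightarrow> vcmp K (idc K g) \<alpha> = \<alpha> \<and> vcmp K \<alpha> (idc K f) = \<alpha>) \<and>
    (\<forall>\<alpha> \<beta> f f' g g' A B C. cell K \<alpha> f f' \<longrightarrow> cell K \<beta> g g' \<longrightarrow> arr1 K f A B \<longrightarrow> arr1 K g B C \<longrightarrow>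
        cell K (hcmp K \<beta> \<alpha>) (cmp1 K g f) (cmp1 K g' f')) \<and>
    (\<forall>\<alpha> \<beta> \<gamma> f f' g g' h h' A B C D. cell K \<alpha> f f' \<longrightarrow> cell K \<beta> g g' \<longrightarrow> cell K \<gamma> h h' \<longrightarrow>
        arr1 K f A B \<longrightarrow> arr1 K g B C \<longrightarrow> arr1 K h C D \<longrightarrow>
        hcmp K \<gamma> (hcmp K \<beta> \<alpha>) = hcmp K (hcmp K \<gamma> \<beta>) \<alpha>) \<and>
    (\<forall>\<alpha> f f' A B. cell K \<alpha> f f' \<longrightarrow> arr1 K f A B \<longrightarrow>
        hcmp K (idc K (idn1 K B)) \<alpha> = \<alpha> \<and> hcmp K \<alpha> (idc K (idn1 K A)) = \<alpha>) \<and>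
    (\<forall>f g A B C. arr1 K f A B \<longrightarrow> arr1 K g B C \<longrightarrow>
        hcmp K (idc K g) (idc K f) = idc K (cmp1 K g f)) \<and>
    (\<forall>\<alpha> \<alpha>' \<beta> \<beta>' f f' f'' g g' g'' A B C.
        cell K \<alpha> f f' \<longrightarrow> cell K \<alpha>' f' f'' \<longrightarrow> cell K \<beta> g g' \<longrightarrow> cell K \<beta>' g' g'' \<longrightarrow>
        arr1 K f A B \<longrightarrow> arr1 K g B C \<longrightarrow>
        hcmp K (vcmp K \<beta>' \<beta>) (vcmp K \<alpha>' \<alpha>) = vcmp K (hcmp K \<beta>' \<alpha>') (hcmp K \<beta> \<alpha>))"

definition yb_operator :: "('o,'a,'c,'x) twocat_scheme \<Rightarrow> ('a \<Rightarrow> 'a \<Rightarrow> 'c) \<Rightarrow> bool" where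
  "yb_operator K c \<longleftrightarrow>
    (\<forall>f g A. arr1 K f A A \<longrightarrow> arr1 K g A A \<longrightarrow> cell K (c g f) (cmp1 K g f) (cmp1 K f g)) \<and>
    (\<forall>f f' g g' \<alpha> \<beta> A. arr1 K f A A \<longrightarrow> arr1 K g A A \<longrightarrow> cell K \<alpha> g g' \<longrightarrow> cell K \<beta> f f' \<longrightarrow>
        vcmp K (c g' f') (hcmp K \<alpha> \<beta>) = vcmp K (hcmp K \<beta> \<alpha>) (c g f)) \<and>
    (\<forall>f g h A. arr1 K f A A \<longrightarrow> arr1 K g A A \<longrightarrow> arr1 K h A A \<longrightarrow>
        vcmp K (hcmp K (c g f) (idc K h)) (vcmp K (hcmp K (idc K g) (c h f)) (hcmp K (c h g) (idc K f)))
      = vcmp K (hcmp K (idc K f) (c h g)) (vcmp K (hcmp K (c h f) (idc K g)) (hcmp K (idc K h) (c g f)))) \<and>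
    (\<forall>f A. arr1 K f A A \<longrightarrow> c (idn1 K A) f = idc K f \<and> c f (idn1 K A) = idc K f)"

definition c_bimonad :: "('o,'a,'c,'x) twocat_scheme \<Rightarrow> ('a \<Rightarrow> 'a \<Rightarrow> 'c) \<Rightarrow> 'o \<Rightarrow> 'a \<Rightarrow>
    'c \<Rightarrow> 'c \<Rightarrow> 'c \<Rightarrow> 'c \<Rightarrow> bool" where
  "c_bimonad K c A b \<mu> \<eta> \<Delta> \<epsilon> \<longleftrightarrow>
    arr1 K b A A \<and>
    cell K \<mu> (cmp1 K b b) b \<and> cell K \<eta> (idn1 K A) b \<and>
    cell K \<Delta> b (cmp1 K b b) \<and> cell K \<epsilon> b (idn1 K A) \<and>
    \<comment> \<open>monad\<close>
    vcmp K \<mu> (hcmp K \<mu> (idc K b)) = vcmp K \<mu> (hcmp K (idc K b) \<mu>) \<and>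
    vcmp K \<mu> (hcmp K \<eta> (idc K b)) = idc K b \<and>
    vcmp K \<mu> (hcmp K (idc K b) \<eta>) = idc K b \<and>
    \<comment> \<open>comonad\<close>
    vcmp K (hcmp K \<Delta> (idc K b)) \<Delta> = vcmp K (hcmp K (idc K b) \<Delta>) \<Delta> \<and>
    vcmp K (hcmp K \<epsilon> (idc K b)) \<Delta> = idc K b \<and>
    vcmp K (hcmp K (idc K b) \<epsilon>) \<Delta> = idc K b \<and>
    \<comment> \<open>c b b is a left distributive law for the monad\<close>
    vcmp K (c b b) (hcmp K (idc K b) \<mu>)
      = vcmp K (hcmp K \<mu> (idc K b)) (vcmp K (hcmp K (idc K b) (c b b)) (hcmp K (c b b) (idc K b))) \<and>
    vcmp K (c b b) (hcmp K (idc K b) \<eta>) = hcmp K \<eta> (idc K b) \<and>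
    \<comment> \<open>c b b is a right distributive law for the monad\<close>
    vcmp K (c b b) (hcmp K \<mu> (idc K b))
      = vcmp K (hcmp K (idc K b) \<mu>) (vcmp K (hcmp K (c b b) (idc K b)) (hcmp K (idc K b) (c b b))) \<and>
    vcmp K (c b b) (hcmp K \<eta> (idc K b)) = hcmp K (idc K b) \<eta> \<and>
    \<comment> \<open>c b b is a left distributive law for the comonad\<close>
    vcmp K (hcmp K \<Delta> (idc K b)) (c b b)
      = vcmp K (hcmp K (idc K b) (c b b)) (vcmp K (hcmp K (c b b) (idc K b)) (hcmp K (idc K b) \<Delta>)) \<and>
    vcmp K (hcmp K \<epsilon> (idc K b)) (c b b) = hcmp K (idc K b) \<epsilon> \<and>
    \<comment> \<open>c b b is a right distributive law for the comonad\<close>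
    vcmp K (hcmp K (idc K b) \<Delta>) (c b b)
      = vcmp K (hcmp K (c b b) (idc K b)) (vcmp K (hcmp K (idc K b) (c b b)) (hcmp K \<Delta> (idc K b))) \<and>
    vcmp K (hcmp K (idc K b) \<epsilon>) (c b b) = hcmp K \<epsilon> (idc K b) \<and>
    \<comment> \<open>bimonad compatibility\<close>
    vcmp K (hcmp K \<mu> \<mu>) (vcmp K (hcmp K (idc K b) (hcmp K (c b b) (idc K b))) (hcmp K \<Delta> \<Delta>))
      = vcmp K \<Delta> \<mu> \<and>
    hcmp K \<epsilon> \<epsilon> = vcmp K \<epsilon> \<mu> \<and>
    hcmp K \<eta> \<eta> = vcmp K \<Delta> \<eta> \<and>
    vcmp K \<epsilon> \<eta> = idc K (idn1 K A)"

definition right_rel_bimonad_module :: "('o,'a,'c,'x) twocat_scheme \<Rightarrow> ('a \<Rightarrow> 'a \<Rightarrow> 'c) \<Rightarrow>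
    'o \<Rightarrow> 'o \<Rightarrow> 'a \<Rightarrow> 'c \<Rightarrow> 'c \<Rightarrow> 'c \<Rightarrow> 'c \<Rightarrow> 'a \<Rightarrow> 'c \<Rightarrow> 'c \<Rightarrow> bool" where
  "right_rel_bimonad_module K c A B b \<mu> \<eta> \<Delta> \<epsilon> x act coact \<longleftrightarrow>
    c_bimonad K c A b \<mu> \<eta> \<Delta> \<epsilon> \<and>
    arr1 K x A B \<and>
    cell K act (cmp1 K x b) x \<and> cell K coact x (cmp1 K x b) \<and>
    vcmp K act (hcmp K act (idc K b)) = vcmp K act (hcmp K (idc K x) \<mu>) \<and>
    vcmp K act (hcmp K (idc K x) \<eta>) = idc K x \<and>
    vcmp K (hcmp K coact (idc K b)) coact = vcmp K (hcmp K (idc K x) \<Delta>) coact \<and>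
    vcmp K (hcmp K (idc K x) \<epsilon>) coact = idc K x \<and>
    vcmp K (hcmp K act \<mu>) (vcmp K (hcmp K (idc K x) (hcmp K (c b b) (idc K b))) (hcmp K coact \<Delta>))
      = vcmp K coact act"

text \<open>F0, F1, F2 act on objects, 1-cells, 2-cells;
  L2 g f = F^2_{g,f} : F g o F f \<Rightarrow> F (g f),  L0 A = F^0_A : id \<Rightarrow> F(id_A),
  C2 g f = F_{2;g,f} : F (g f) \<Rightarrow> F g o F f,  C0 A = F_{0;A} : F(id_A) \<Rightarrow> id,
  \<nu> f g : F f o F g \<Rightarrow> F g o F f for endo-1-cells f, g.\<close>

definition bilax_functor ::
  "('o,'a,'c,'x) twocat_scheme \<Rightarrow> ('a \<Rightarrow> 'a \<Rightarrow> 'c) \<Rightarrow>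
   ('p,'b,'d,'y) twocat_scheme \<Rightarrow> ('b \<Rightarrow> 'b \<Rightarrow> 'd) \<Rightarrow>
   ('o \<Rightarrow> 'p) \<Rightarrow> ('a \<Rightarrow> 'b) \<Rightarrow> ('c \<Rightarrow> 'd) \<Rightarrow>
   ('a \<Rightarrow> 'a \<Rightarrow> 'd) \<Rightarrow> ('o \<Rightarrow> 'd) \<Rightarrow> ('a \<Rightarrow> 'a \<Rightarrow> 'd) \<Rightarrow> ('o \<Rightarrow> 'd) \<Rightarrow>
   ('a \<Rightarrow> 'a \<Rightarrow> 'd) \<Rightarrow> bool" where
  "bilax_functor K c K' c' F0 F1 F2 L2 L0 C2 C0 \<nu> \<longleftrightarrow>
    \<comment> \<open>action on objects, 1-cells, 2-cells; F2 is functorial on hom-categories\<close>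
    (\<forall>A\<in>ob K. F0 A \<in> ob K') \<and>
    (\<forall>f A B. arr1 K f A B \<longrightarrow> arr1 K' (F1 f) (F0 A) (F0 B)) \<and>
    (\<forall>\<alpha> f g. cell K \<alpha> f g \<longrightarrow> cell K' (F2 \<alpha>) (F1 f) (F1 g)) \<and>
    (\<forall>f\<in>ar K. F2 (idc K f) = idc K' (F1 f)) \<and>
    (\<forall>\<alpha> \<beta> f g h. cell K \<alpha> f g \<longrightarrow> cell K \<beta> g h \<longrightarrow> F2 (vcmp K \<beta> \<alpha>) = vcmp K' (F2 \<beta>) (F2 \<alpha>)) \<and>
    \<comment> \<open>lax structure\<close>
    (\<forall>f g A B C. arr1 K f A B \<longrightarrow> arr1 K g B C \<longrightarrow>
        cell K' (L2 g f) (cmp1 K' (F1 g) (F1 f)) (F1 (cmp1 K g f))) \<and>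
    (\<forall>A\<in>ob K. cell K' (L0 A) (idn1 K' (F0 A)) (F1 (idn1 K A))) \<and>
    (\<forall>\<alpha> \<beta> f f' g g' A B C. cell K \<alpha> f f' \<longrightarrow> cell K \<beta> g g' \<longrightarrow> arr1 K f A B \<longrightarrow> arr1 K g B C \<longrightarrow>
        vcmp K' (F2 (hcmp K \<beta> \<alpha>)) (L2 g f) = vcmp K' (L2 g' f') (hcmp K' (F2 \<beta>) (F2 \<alpha>))) \<and>
    (\<forall>f g h A B C D. arr1 K f A B \<longrightarrow> arr1 K g B C \<longrightarrow> arr1 K h C D \<longrightarrow>
        vcmp K' (L2 (cmp1 K h g) f) (hcmp K' (L2 h g) (idc K' (F1 f)))
      = vcmp K' (L2 h (cmp1 K g f)) (hcmp K' (idc K' (F1 h)) (L2 g f))) \<and>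
    (\<forall>f A B. arr1 K f A B \<longrightarrow>
        vcmp K' (L2 f (idn1 K A)) (hcmp K' (idc K' (F1 f)) (L0 A)) = idc K' (F1 f) \<and>
        vcmp K' (L2 (idn1 K B) f) (hcmp K' (L0 B) (idc K' (F1 f))) = idc K' (F1 f)) \<and>
    \<comment> \<open>colax structure\<close>
    (\<forall>f g A B C. arr1 K f A B \<longrightarrow> arr1 K g B C \<longrightarrow>
        cell K' (C2 g f) (F1 (cmp1 K g f)) (cmp1 K' (F1 g) (F1 f))) \<and>
    (\<forall>A\<in>ob K. cell K' (C0 A) (F1 (idn1 K A)) (idn1 K' (F0 A))) \<and>
    (\<forall>\<alpha> \<beta> f f' g g' A B C. cell K \<alpha> f f' \<longrightarrow> cell K \<beta> g g' \<longrightarrow> arr1 K f A B \<longrightarrow> arr1 K g B C \<longrightarrow>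
        vcmp K' (hcmp K' (F2 \<beta>) (F2 \<alpha>)) (C2 g f) = vcmp K' (C2 g' f') (F2 (hcmp K \<beta> \<alpha>))) \<and>
    (\<forall>f g h A B C D. arr1 K f A B \<longrightarrow> arr1 K g B C \<longrightarrow> arr1 K h C D \<longrightarrow>
        vcmp K' (hcmp K' (C2 h g) (idc K' (F1 f))) (C2 (cmp1 K h g) f)
      = vcmp K' (hcmp K' (idc K' (F1 h)) (C2 g f)) (C2 h (cmp1 K g f))) \<and>
    (\<forall>f A B. arr1 K f A B \<longrightarrow>
        vcmp K' (hcmp K' (idc K' (F1 f)) (C0 A)) (C2 f (idn1 K A)) = idc K' (F1 f) \<and>
        vcmp K' (hcmp K' (C0 B) (idc K' (F1 f))) (C2 (idn1 K B) f) = idc K' (F1 f)) \<and>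
    \<comment> \<open>\<nu> is a (natural) Yang--Baxter operator\<close>
    (\<forall>f g A. arr1 K f A A \<longrightarrow> arr1 K g A A \<longrightarrow>
        cell K' (\<nu> f g) (cmp1 K' (F1 f) (F1 g)) (cmp1 K' (F1 g) (F1 f))) \<and>
    (\<forall>f f' g g' \<alpha> \<beta> A. arr1 K f A A \<longrightarrow> arr1 K g A A \<longrightarrow> cell K \<alpha> f f' \<longrightarrow> cell K \<beta> g g' \<longrightarrow>
        vcmp K' (\<nu> f' g') (hcmp K' (F2 \<alpha>) (F2 \<beta>)) = vcmp K' (hcmp K' (F2 \<beta>) (F2 \<alpha>)) (\<nu> f g)) \<and>
    (\<forall>f g h A. arr1 K f A A \<longrightarrow> arr1 K g A A \<longrightarrow> arr1 K h A A \<longrightarrow>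
        vcmp K' (hcmp K' (\<nu> g f) (idc K' (F1 h)))
          (vcmp K' (hcmp K' (idc K' (F1 g)) (\<nu> h f)) (hcmp K' (\<nu> h g) (idc K' (F1 f))))
      = vcmp K' (hcmp K' (idc K' (F1 f)) (\<nu> h g))
          (vcmp K' (hcmp K' (\<nu> h f) (idc K' (F1 g))) (hcmp K' (idc K' (F1 h)) (\<nu> g f)))) \<and>
    \<comment> \<open>\<nu> is a left and right distributive law for the lax structure\<close>
    (\<forall>f g h A. arr1 K f A A \<longrightarrow> arr1 K g A A \<longrightarrow> arr1 K h A A \<longrightarrow>
        vcmp K' (\<nu> f (cmp1 K g h)) (hcmp K' (idc K' (F1 f)) (L2 g h))
      = vcmp K' (hcmp K' (L2 g h) (idc K' (F1 f)))
          (vcmp K' (hcmp K' (idc K' (F1 g)) (\<nu> f h)) (hcmp K' (\<nu> f g) (idc K' (F1 h))))) \<and>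
    (\<forall>f g h A. arr1 K f A A \<longrightarrow> arr1 K g A A \<longrightarrow> arr1 K h A A \<longrightarrow>
        vcmp K' (\<nu> (cmp1 K g h) f) (hcmp K' (L2 g h) (idc K' (F1 f)))
      = vcmp K' (hcmp K' (idc K' (F1 f)) (L2 g h))
          (vcmp K' (hcmp K' (\<nu> g f) (idc K' (F1 h))) (hcmp K' (idc K' (F1 g)) (\<nu> h f)))) \<and>
    (\<forall>f A. arr1 K f A A \<longrightarrow>
        vcmp K' (\<nu> f (idn1 K A)) (hcmp K' (idc K' (F1 f)) (L0 A)) = hcmp K' (L0 A) (idc K' (F1 f)) \<and>
        vcmp K' (\<nu> (idn1 K A) f) (hcmp K' (L0 A) (idc K' (F1 f))) = hcmp K' (idc K' (F1 f)) (L0 A)) \<and>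
    \<comment> \<open>\<nu> is a left and right distributive law for the colax structure\<close>
    (\<forall>f g h A. arr1 K f A A \<longrightarrow> arr1 K g A A \<longrightarrow> arr1 K h A A \<longrightarrow>
        vcmp K' (hcmp K' (C2 g h) (idc K' (F1 f))) (\<nu> f (cmp1 K g h))
      = vcmp K' (hcmp K' (idc K' (F1 g)) (\<nu> f h))
          (vcmp K' (hcmp K' (\<nu> f g) (idc K' (F1 h))) (hcmp K' (idc K' (F1 f)) (C2 g h)))) \<and>
    (\<forall>f g h A. arr1 K f A A \<longrightarrow> arr1 K g A A \<longrightarrow> arr1 K h A A \<longrightarrow>
        vcmp K' (hcmp K' (idc K' (F1 f)) (C2 g h)) (\<nu> (cmp1 K g h) f)
      = vcmp K' (hcmp K' (\<nu> g f) (idc K' (F1 h)))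
          (vcmp K' (hcmp K' (idc K' (F1 g)) (\<nu> h f)) (hcmp K' (C2 g h) (idc K' (F1 f))))) \<and>
    (\<forall>f A. arr1 K f A A \<longrightarrow>
        vcmp K' (hcmp K' (C0 A) (idc K' (F1 f))) (\<nu> f (idn1 K A)) = hcmp K' (idc K' (F1 f)) (C0 A) \<and>
        vcmp K' (hcmp K' (idc K' (F1 f)) (C0 A)) (\<nu> (idn1 K A) f) = hcmp K' (C0 A) (idc K' (F1 f))) \<and>
    \<comment> \<open>bilaxity conditions\<close>
    (\<forall>k h f g A B C. arr1 K k A B \<longrightarrow> arr1 K h B B \<longrightarrow> arr1 K f B B \<longrightarrow> arr1 K g B C \<longrightarrow>
        vcmp K' (hcmp K' (L2 g h) (L2 f k))
          (vcmp K' (hcmp K' (idc K' (F1 g)) (hcmp K' (\<nu> f h) (idc K' (F1 k))))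
                   (hcmp K' (C2 g f) (C2 h k)))
      = vcmp K' (C2 (cmp1 K g h) (cmp1 K f k))
          (vcmp K' (F2 (hcmp K (idc K g) (hcmp K (c f h) (idc K k))))
                   (L2 (cmp1 K g f) (cmp1 K h k)))) \<and>
    (\<forall>A\<in>ob K. hcmp K' (L0 A) (L0 A) = vcmp K' (C2 (idn1 K A) (idn1 K A)) (L0 A)) \<and>
    (\<forall>A\<in>ob K. hcmp K' (C0 A) (C0 A) = vcmp K' (C0 A) (L2 (idn1 K A) (idn1 K A))) \<and>
    (\<forall>A\<in>ob K. vcmp K' (C0 A) (L0 A) = idc K' (idn1 K' (F0 A)))"

definition yb_compatible ::
  "('o,'a,'c,'x) twocat_scheme \<Rightarrow> ('b \<Rightarrow> 'b \<Rightarrow> 'd) \<Rightarrow> ('a \<Rightarrow> 'b) \<Rightarrow> ('a \<Rightarrow> 'a \<Rightarrow> 'd) \<Rightarrow> bool" where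
  "yb_compatible K c' F1 \<nu> \<longleftrightarrow>
    (\<forall>f g A. arr1 K f A A \<longrightarrow> arr1 K g A A \<longrightarrow> \<nu> f g = c' (F1 f) (F1 g))"

end

theory Submission
  imports Defs
begin

locale tc = fixes K :: "('o,'a,'c,'x) twocat_scheme" assumes TC: "two_category K"
begin

lemmas T = TC[unfolded two_category_def]
lemmas A01 = T[THEN conjunct1]
lemmas A02 = T[THEN conjunct2, THEN conjunct1]
lemmas A03 = T[THEN conjunct2, THEN conjunct2, THEN conjunct1]
lemmas A04 = T[THEN conjunct2, THEN conjunct2, THEN conjunct2, THEN conjunct1]
lemmas A05 = T[THEN conjunct2, THEN conjunct2, THEN conjunct2, THEN conjunct2, THEN conjunct1]
lemmas A06 = T[THEN conjunct2, THEN conjunct2, THEN conjunct2, THEN conjunct2, THEN conjunct2, THEN conjunct1]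
lemmas A07 = T[THEN conjunct2, THEN conjunct2, THEN conjunct2, THEN conjunct2, THEN conjunct2, THEN conjunct2, THEN conjunct1]
lemmas A08 = T[THEN conjunct2, THEN conjunct2, THEN conjunct2, THEN conjunct2, THEN conjunct2, THEN conjunct2, THEN conjunct2, THEN conjunct1]
lemmas A09 = T[THEN conjunct2, THEN conjunct2, THEN conjunct2, THEN conjunct2, THEN conjunct2, THEN conjunct2, THEN conjunct2, THEN conjunct2, THEN conjunct1]
lemmas A10 = T[THEN conjunct2, THEN conjunct2, THEN conjunct2, THEN conjunct2, THEN conjunct2, THEN conjunct2, THEN conjunct2, THEN conjunct2, THEN conjunct2, THEN conjunct1]
lemmas A11 = T[THEN conjunct2, THEN conjunct2, THEN conjunct2, THEN conjunct2, THEN conjunct2, THEN conjunct2, THEN conjunct2, THEN conjunct2, THEN conjunct2, THEN conjunct2, THEN conjunct1]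
lemmas A12 = T[THEN conjunct2, THEN conjunct2, THEN conjunct2, THEN conjunct2, THEN conjunct2, THEN conjunct2, THEN conjunct2, THEN conjunct2, THEN conjunct2, THEN conjunct2, THEN conjunct2, THEN conjunct1]
lemmas A13 = T[THEN conjunct2, THEN conjunct2, THEN conjunct2, THEN conjunct2, THEN conjunct2, THEN conjunct2, THEN conjunct2, THEN conjunct2, THEN conjunct2, THEN conjunct2, THEN conjunct2, THEN conjunct2, THEN conjunct1]
lemmas A14 = T[THEN conjunct2, THEN conjunct2, THEN conjunct2, THEN conjunct2, THEN conjunct2, THEN conjunct2, THEN conjunct2, THEN conjunct2, THEN conjunct2, THEN conjunct2, THEN conjunct2, THEN conjunct2, THEN conjunct2, THEN conjunct1]
lemmas A15 = T[THEN conjunct2, THEN conjunct2, THEN conjunct2, THEN conjunct2, THEN conjunct2, THEN conjunct2, THEN conjunct2, THEN conjunct2, THEN conjunct2, THEN conjunct2, THEN conjunct2, THEN conjunct2, THEN conjunct2, THEN conjunct2]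

lemma ar_src[simp]: "f \<in> ar K \<Longrightarrow> src1 K f \<in> ob K" using A01[rule_format] by blast
lemma ar_trg[simp]: "f \<in> ar K \<Longrightarrow> trg1 K f \<in> ob K" using A01[rule_format] by blast
lemma idn_ar[simp]: "A \<in> ob K \<Longrightarrow> idn1 K A \<in> ar K" using A02[rule_format] unfolding arr1_def by blast
lemma idn_src[simp]: "A \<in> ob K \<Longrightarrow> src1 K (idn1 K A) = A" using A02[rule_format] unfolding arr1_def by blast
lemma idn_trg[simp]: "A \<in> ob K \<Longrightarrow> trg1 K (idn1 K A) = A" using A02[rule_format] unfolding arr1_def by blast

lemma cmp_arr: "f \<in> ar K \<Longrightarrow> g \<in> ar K \<Longrightarrow> trg1 K f = src1 K g \<Longrightarrow> arr1 K (cmp1 K g f) (src1 K f) (trg1 K g)"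
proof -
  assume a: "f \<in> ar K" "g \<in> ar K" "trg1 K f = src1 K g"
  have "arr1 K f (src1 K f) (trg1 K f)" "arr1 K g (trg1 K f) (trg1 K g)" using a by (auto simp: arr1_def)
  note hh = this show ?thesis using A03[rule_format, OF hh] by simp
qed
lemma cmp_ar[simp]: "f \<in> ar K \<Longrightarrow> g \<in> ar K \<Longrightarrow> trg1 K f = src1 K g \<Longrightarrow> cmp1 K g f \<in> ar K"
  using cmp_arr by (simp add: arr1_def)
lemma cmp_src[simp]: "f \<in> ar K \<Longrightarrow> g \<in> ar K \<Longrightarrow> trg1 K f = src1 K g \<Longrightarrow> src1 K (cmp1 K g f) = src1 K f"
  using cmp_arr by (simp add: arr1_def)
lemma cmp_trg[simp]: "f \<in> ar K \<Longrightarrow> g \<in> ar K \<Longrightarrow> trg1 K f = src1 K g \<Longrightarrow> trg1 K (cmp1 K g f) = trg1 K g"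
  using cmp_arr by (simp add: arr1_def)

lemma cmp_assoc[simp]: "f \<in> ar K \<Longrightarrow> g \<in> ar K \<Longrightarrow> h \<in> ar K \<Longrightarrow> trg1 K f = src1 K g \<Longrightarrow> trg1 K g = src1 K h \<Longrightarrow>
   cmp1 K (cmp1 K h g) f = cmp1 K h (cmp1 K g f)"
proof -
  assume a: "f \<in> ar K" "g \<in> ar K" "h \<in> ar K" "trg1 K f = src1 K g" "trg1 K g = src1 K h"
  have "arr1 K f (src1 K f) (trg1 K f)" "arr1 K g (trg1 K f) (trg1 K g)" "arr1 K h (trg1 K g) (trg1 K h)" using a by (auto simp: arr1_def)
  note hh = this show ?thesis using A04[rule_format, OF hh] by simp
qed
lemma cmp_idl[simp]: "f \<in> ar K \<Longrightarrow> B = trg1 K f \<Longrightarrow> cmp1 K (idn1 K B) f = f"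
  using A05[rule_format, of f "src1 K f" "trg1 K f"] by (simp add: arr1_def)
lemma cmp_idr[simp]: "f \<in> ar K \<Longrightarrow> A = src1 K f \<Longrightarrow> cmp1 K f (idn1 K A) = f"
  using A05[rule_format, of f "src1 K f" "trg1 K f"] by (simp add: arr1_def)

lemma cl_cell: "\<alpha> \<in> cl K \<Longrightarrow> \<exists>A B. arr1 K (dom2 K \<alpha>) A B \<and> arr1 K (cod2 K \<alpha>) A B"
  using A06[rule_format] by blast
lemma dom_ar[simp]: "\<alpha> \<in> cl K \<Longrightarrow> dom2 K \<alpha> \<in> ar K" using cl_cell arr1_def by metis
lemma cod_ar[simp]: "\<alpha> \<in> cl K \<Longrightarrow> cod2 K \<alpha> \<in> ar K" using cl_cell arr1_def by metis
lemma cod_src[simp]: "\<alpha> \<in> cl K \<Longrightarrow> src1 K (cod2 K \<alpha>) = src1 K (dom2 K \<alpha>)" using cl_cell arr1_def by metis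
lemma cod_trg[simp]: "\<alpha> \<in> cl K \<Longrightarrow> trg1 K (cod2 K \<alpha>) = trg1 K (dom2 K \<alpha>)" using cl_cell arr1_def by metis

lemma idc_cell: "f \<in> ar K \<Longrightarrow> cell K (idc K f) f f" using A07[rule_format] by blast
lemma idc_cl[simp]: "f \<in> ar K \<Longrightarrow> idc K f \<in> cl K" using idc_cell cell_def by metis
lemma idc_dom[simp]: "f \<in> ar K \<Longrightarrow> dom2 K (idc K f) = f" using idc_cell cell_def by metis
lemma idc_cod[simp]: "f \<in> ar K \<Longrightarrow> cod2 K (idc K f) = f" using idc_cell cell_def by metis

lemma v_cell: "\<alpha> \<in> cl K \<Longrightarrow> \<beta> \<in> cl K \<Longrightarrow> cod2 K \<alpha> = dom2 K \<beta> \<Longrightarrow> cell K (vcmp K \<beta> \<alpha>) (dom2 K \<alpha>) (cod2 K \<beta>)"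
proof -
  assume a: "\<alpha> \<in> cl K" "\<beta> \<in> cl K" "cod2 K \<alpha> = dom2 K \<beta>"
  hence "cell K \<alpha> (dom2 K \<alpha>) (cod2 K \<alpha>)" "cell K \<beta> (cod2 K \<alpha>) (cod2 K \<beta>)" by (auto simp: cell_def)
  note hh = this show ?thesis using A08[rule_format, OF hh] by simp
qed
lemma v_cl[simp]: "\<alpha> \<in> cl K \<Longrightarrow> \<beta> \<in> cl K \<Longrightarrow> cod2 K \<alpha> = dom2 K \<beta> \<Longrightarrow> vcmp K \<beta> \<alpha> \<in> cl K" using v_cell cell_def by metis
lemma v_dom[simp]: "\<alpha> \<in> cl K \<Longrightarrow> \<beta> \<in> cl K \<Longrightarrow> cod2 K \<alpha> = dom2 K \<beta> \<Longrightarrow> dom2 K (vcmp K \<beta> \<alpha>) = dom2 K \<alpha>" using v_cell cell_def by metis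
lemma v_cod[simp]: "\<alpha> \<in> cl K \<Longrightarrow> \<beta> \<in> cl K \<Longrightarrow> cod2 K \<alpha> = dom2 K \<beta> \<Longrightarrow> cod2 K (vcmp K \<beta> \<alpha>) = cod2 K \<beta>" using v_cell cell_def by metis

lemma v_assoc[simp]: "\<alpha> \<in> cl K \<Longrightarrow> \<beta> \<in> cl K \<Longrightarrow> \<gamma> \<in> cl K \<Longrightarrow> cod2 K \<alpha> = dom2 K \<beta> \<Longrightarrow> cod2 K \<beta> = dom2 K \<gamma> \<Longrightarrow>
  vcmp K (vcmp K \<gamma> \<beta>) \<alpha> = vcmp K \<gamma> (vcmp K \<beta> \<alpha>)"
proof -
  assume a: "\<alpha> \<in> cl K" "\<beta> \<in> cl K" "\<gamma> \<in> cl K" "cod2 K \<alpha> = dom2 K \<beta>" "cod2 K \<beta> = dom2 K \<gamma>"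
  hence "cell K \<alpha> (dom2 K \<alpha>) (cod2 K \<alpha>)" "cell K \<beta> (cod2 K \<alpha>) (cod2 K \<beta>)" "cell K \<gamma> (cod2 K \<beta>) (cod2 K \<gamma>)" by (auto simp: cell_def)
  note hh = this show ?thesis using A09[rule_format, OF hh] by simp
qed
lemma v_idl[simp]: "\<alpha> \<in> cl K \<Longrightarrow> g = cod2 K \<alpha> \<Longrightarrow> vcmp K (idc K g) \<alpha> = \<alpha>"
  using A10[rule_format] unfolding cell_def by blast
lemma v_idr[simp]: "\<alpha> \<in> cl K \<Longrightarrow> f = dom2 K \<alpha> \<Longrightarrow> vcmp K \<alpha> (idc K f) = \<alpha>"
  using A10[rule_format] unfolding cell_def by blast

lemma h_cell: "\<alpha> \<in> cl K \<Longrightarrow> \<beta> \<in> cl K \<Longrightarrow> trg1 K (dom2 K \<alpha>) = src1 K (dom2 K \<beta>) \<Longrightarrow>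
   cell K (hcmp K \<beta> \<alpha>) (cmp1 K (dom2 K \<beta>) (dom2 K \<alpha>)) (cmp1 K (cod2 K \<beta>) (cod2 K \<alpha>))"
proof -
  assume a: "\<alpha> \<in> cl K" "\<beta> \<in> cl K" "trg1 K (dom2 K \<alpha>) = src1 K (dom2 K \<beta>)"
  hence "cell K \<alpha> (dom2 K \<alpha>) (cod2 K \<alpha>)" "cell K \<beta> (dom2 K \<beta>) (cod2 K \<beta>)"
    "arr1 K (dom2 K \<alpha>) (src1 K (dom2 K \<alpha>)) (trg1 K (dom2 K \<alpha>))" "arr1 K (dom2 K \<beta>) (trg1 K (dom2 K \<alpha>)) (trg1 K (dom2 K \<beta>))"
    by (auto simp: cell_def arr1_def)
  note hh = this show ?thesis using A11[rule_format, OF hh] by simp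
qed
lemma h_cl[simp]: "\<alpha> \<in> cl K \<Longrightarrow> \<beta> \<in> cl K \<Longrightarrow> trg1 K (dom2 K \<alpha>) = src1 K (dom2 K \<beta>) \<Longrightarrow> hcmp K \<beta> \<alpha> \<in> cl K" using h_cell cell_def by metis
lemma h_dom[simp]: "\<alpha> \<in> cl K \<Longrightarrow> \<beta> \<in> cl K \<Longrightarrow> trg1 K (dom2 K \<alpha>) = src1 K (dom2 K \<beta>) \<Longrightarrow> dom2 K (hcmp K \<beta> \<alpha>) = cmp1 K (dom2 K \<beta>) (dom2 K \<alpha>)" using h_cell cell_def by metis
lemma h_cod[simp]: "\<alpha> \<in> cl K \<Longrightarrow> \<beta> \<in> cl K \<Longrightarrow> trg1 K (dom2 K \<alpha>) = src1 K (dom2 K \<beta>) \<Longrightarrow> cod2 K (hcmp K \<beta> \<alpha>) = cmp1 K (cod2 K \<beta>) (cod2 K \<alpha>)" using h_cell cell_def by metis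

lemma h_assoc[simp]: "\<alpha> \<in> cl K \<Longrightarrow> \<beta> \<in> cl K \<Longrightarrow> \<gamma> \<in> cl K \<Longrightarrow> trg1 K (dom2 K \<alpha>) = src1 K (dom2 K \<beta>) \<Longrightarrow> trg1 K (dom2 K \<beta>) = src1 K (dom2 K \<gamma>) \<Longrightarrow>
  hcmp K (hcmp K \<gamma> \<beta>) \<alpha> = hcmp K \<gamma> (hcmp K \<beta> \<alpha>)"
proof -
  assume a: "\<alpha> \<in> cl K" "\<beta> \<in> cl K" "\<gamma> \<in> cl K" "trg1 K (dom2 K \<alpha>) = src1 K (dom2 K \<beta>)" "trg1 K (dom2 K \<beta>) = src1 K (dom2 K \<gamma>)"
  hence "cell K \<alpha> (dom2 K \<alpha>) (cod2 K \<alpha>)" "cell K \<beta> (dom2 K \<beta>) (cod2 K \<beta>)" "cell K \<gamma> (dom2 K \<gamma>) (cod2 K \<gamma>)"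
    "arr1 K (dom2 K \<alpha>) (src1 K (dom2 K \<alpha>)) (trg1 K (dom2 K \<alpha>))" "arr1 K (dom2 K \<beta>) (trg1 K (dom2 K \<alpha>)) (trg1 K (dom2 K \<beta>))"
    "arr1 K (dom2 K \<gamma>) (trg1 K (dom2 K \<beta>)) (trg1 K (dom2 K \<gamma>))"
    by (auto simp: cell_def arr1_def)
  note hh = this show ?thesis using A12[rule_format, OF hh] by simp
qed

lemma h_idl[simp]: "\<alpha> \<in> cl K \<Longrightarrow> B = trg1 K (dom2 K \<alpha>) \<Longrightarrow> hcmp K (idc K (idn1 K B)) \<alpha> = \<alpha>"
proof -
  assume a: "\<alpha> \<in> cl K" "B = trg1 K (dom2 K \<alpha>)"
  hence "cell K \<alpha> (dom2 K \<alpha>) (cod2 K \<alpha>)" "arr1 K (dom2 K \<alpha>) (src1 K (dom2 K \<alpha>)) B" by (auto simp: cell_def arr1_def)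
  note hh = this show ?thesis using A13[rule_format, OF hh] by simp
qed
lemma h_idr[simp]: "\<alpha> \<in> cl K \<Longrightarrow> A = src1 K (dom2 K \<alpha>) \<Longrightarrow> hcmp K \<alpha> (idc K (idn1 K A)) = \<alpha>"
proof -
  assume a: "\<alpha> \<in> cl K" "A = src1 K (dom2 K \<alpha>)"
  hence "cell K \<alpha> (dom2 K \<alpha>) (cod2 K \<alpha>)" "arr1 K (dom2 K \<alpha>) A (trg1 K (dom2 K \<alpha>))" by (auto simp: cell_def arr1_def)
  note hh = this show ?thesis using A13[rule_format, OF hh] by simp
qed

lemma h_idc: "f \<in> ar K \<Longrightarrow> g \<in> ar K \<Longrightarrow> trg1 K f = src1 K g \<Longrightarrow> hcmp K (idc K g) (idc K f) = idc K (cmp1 K g f)"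
proof -
  assume a: "f \<in> ar K" "g \<in> ar K" "trg1 K f = src1 K g"
  have "arr1 K f (src1 K f) (trg1 K f)" "arr1 K g (trg1 K f) (trg1 K g)" using a by (auto simp: arr1_def)
  note hh = this show ?thesis using A14[rule_format, OF hh] by simp
qed

lemma interchange: "\<alpha> \<in> cl K \<Longrightarrow> \<alpha>' \<in> cl K \<Longrightarrow> \<beta> \<in> cl K \<Longrightarrow> \<beta>' \<in> cl K \<Longrightarrow>
  cod2 K \<alpha> = dom2 K \<alpha>' \<Longrightarrow> cod2 K \<beta> = dom2 K \<beta>' \<Longrightarrow> trg1 K (dom2 K \<alpha>) = src1 K (dom2 K \<beta>) \<Longrightarrow>
  hcmp K (vcmp K \<beta>' \<beta>) (vcmp K \<alpha>' \<alpha>) = vcmp K (hcmp K \<beta>' \<alpha>') (hcmp K \<beta> \<alpha>)"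
proof -
  assume a: "\<alpha> \<in> cl K" "\<alpha>' \<in> cl K" "\<beta> \<in> cl K" "\<beta>' \<in> cl K"
  "cod2 K \<alpha> = dom2 K \<alpha>'" "cod2 K \<beta> = dom2 K \<beta>'" "trg1 K (dom2 K \<alpha>) = src1 K (dom2 K \<beta>)"
  hence "cell K \<alpha> (dom2 K \<alpha>) (cod2 K \<alpha>)" "cell K \<alpha>' (cod2 K \<alpha>) (cod2 K \<alpha>')"
    "cell K \<beta> (dom2 K \<beta>) (cod2 K \<beta>)" "cell K \<beta>' (cod2 K \<beta>) (cod2 K \<beta>')"
    "arr1 K (dom2 K \<alpha>) (src1 K (dom2 K \<alpha>)) (trg1 K (dom2 K \<alpha>))" "arr1 K (dom2 K \<beta>) (trg1 K (dom2 K \<alpha>)) (trg1 K (dom2 K \<beta>))"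
    by (auto simp: cell_def arr1_def)
  note hh = this show ?thesis using A15[rule_format, OF hh] by simp
qed

lemma whisk_r[simp]: "\<beta> \<in> cl K \<Longrightarrow> \<beta>' \<in> cl K \<Longrightarrow> f \<in> ar K \<Longrightarrow> cod2 K \<beta> = dom2 K \<beta>' \<Longrightarrow> trg1 K f = src1 K (dom2 K \<beta>) \<Longrightarrow>
  hcmp K (vcmp K \<beta>' \<beta>) (idc K f) = vcmp K (hcmp K \<beta>' (idc K f)) (hcmp K \<beta> (idc K f))"
  using interchange[of "idc K f" "idc K f" \<beta> \<beta>'] by simp
lemma whisk_l[simp]: "\<alpha> \<in> cl K \<Longrightarrow> \<alpha>' \<in> cl K \<Longrightarrow> g \<in> ar K \<Longrightarrow> cod2 K \<alpha> = dom2 K \<alpha>' \<Longrightarrow> trg1 K (dom2 K \<alpha>) = src1 K g \<Longrightarrow>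
  hcmp K (idc K g) (vcmp K \<alpha>' \<alpha>) = vcmp K (hcmp K (idc K g) \<alpha>') (hcmp K (idc K g) \<alpha>)"
  using interchange[of \<alpha> \<alpha>' "idc K g" "idc K g"] by simp

lemma ctx2: "vcmp K \<beta> \<alpha> = R \<Longrightarrow> \<alpha> \<in> cl K \<Longrightarrow> \<beta> \<in> cl K \<Longrightarrow> X \<in> cl K \<Longrightarrow>
  cod2 K X = dom2 K \<alpha> \<Longrightarrow> cod2 K \<alpha> = dom2 K \<beta> \<Longrightarrow> vcmp K \<beta> (vcmp K \<alpha> X) = vcmp K R X"
proof -
  assume a: "vcmp K \<beta> \<alpha> = R" "\<alpha> \<in> cl K" "\<beta> \<in> cl K" "X \<in> cl K"
  "cod2 K X = dom2 K \<alpha>" "cod2 K \<alpha> = dom2 K \<beta>"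
  have "vcmp K (vcmp K \<beta> \<alpha>) X = vcmp K \<beta> (vcmp K \<alpha> X)" using a(2-) by simp
  thus ?thesis using a(1) by simp
qed
lemma ctx3: "vcmp K \<gamma> (vcmp K \<beta> \<alpha>) = R \<Longrightarrow> \<alpha> \<in> cl K \<Longrightarrow> \<beta> \<in> cl K \<Longrightarrow> \<gamma> \<in> cl K \<Longrightarrow> X \<in> cl K \<Longrightarrow>
  cod2 K X = dom2 K \<alpha> \<Longrightarrow> cod2 K \<alpha> = dom2 K \<beta> \<Longrightarrow> cod2 K \<beta> = dom2 K \<gamma> \<Longrightarrow>
  vcmp K \<gamma> (vcmp K \<beta> (vcmp K \<alpha> X)) = vcmp K R X"
proof -
  assume a: "vcmp K \<gamma> (vcmp K \<beta> \<alpha>) = R" "\<alpha> \<in> cl K" "\<beta> \<in> cl K" "\<gamma> \<in> cl K" "X \<in> cl K"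
  "cod2 K X = dom2 K \<alpha>" "cod2 K \<alpha> = dom2 K \<beta>" "cod2 K \<beta> = dom2 K \<gamma>"
  have "vcmp K (vcmp K \<gamma> (vcmp K \<beta> \<alpha>)) X = vcmp K \<gamma> (vcmp K \<beta> (vcmp K \<alpha> X))" using a(2-) by simp
  thus ?thesis using a(1) by simp
qed

end

locale S = K: tc K + K': tc K' for K :: "('o,'a,'c) twocat" and K' :: "('p,'b,'d) twocat" +
  fixes c c' F0 F1 F2 L2 L0 C2 C0 \<nu> A B b \<mu> \<eta> \<Delta> \<epsilon> x act coact
  assumes YB: "yb_operator K c"
    and BL: "bilax_functor K c K' c' F0 F1 F2 L2 L0 C2 C0 \<nu>"
    and CP: "yb_compatible K c' F1 \<nu>"
    and MM: "right_rel_bimonad_module K c A B b \<mu> \<eta> \<Delta> \<epsilon> x act coact"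
begin

lemmas BB = BL[unfolded bilax_functor_def]
lemmas MB = MM[unfolded right_rel_bimonad_module_def]
lemmas B01 = BB[THEN conjunct1]
lemmas B02 = BB[THEN conjunct2, THEN conjunct1]
lemmas B03 = BB[THEN conjunct2, THEN conjunct2, THEN conjunct1]
lemmas B04 = BB[THEN conjunct2, THEN conjunct2, THEN conjunct2, THEN conjunct1]
lemmas B05 = BB[THEN conjunct2, THEN conjunct2, THEN conjunct2, THEN conjunct2, THEN conjunct1]
lemmas B06 = BB[THEN conjunct2, THEN conjunct2, THEN conjunct2, THEN conjunct2, THEN conjunct2, THEN conjunct1]
lemmas B07 = BB[THEN conjunct2, THEN conjunct2, THEN conjunct2, THEN conjunct2, THEN conjunct2, THEN conjunct2, THEN conjunct1]
lemmas B08 = BB[THEN conjunct2, THEN conjunct2, THEN conjunct2, THEN conjunct2, THEN conjunct2, THEN conjunct2, THEN conjunct2, THEN conjunct1]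
lemmas B09 = BB[THEN conjunct2, THEN conjunct2, THEN conjunct2, THEN conjunct2, THEN conjunct2, THEN conjunct2, THEN conjunct2, THEN conjunct2, THEN conjunct1]
lemmas B10 = BB[THEN conjunct2, THEN conjunct2, THEN conjunct2, THEN conjunct2, THEN conjunct2, THEN conjunct2, THEN conjunct2, THEN conjunct2, THEN conjunct2, THEN conjunct1]
lemmas B11 = BB[THEN conjunct2, THEN conjunct2, THEN conjunct2, THEN conjunct2, THEN conjunct2, THEN conjunct2, THEN conjunct2, THEN conjunct2, THEN conjunct2, THEN conjunct2, THEN conjunct1]
lemmas B12 = BB[THEN conjunct2, THEN conjunct2, THEN conjunct2, THEN conjunct2, THEN conjunct2, THEN conjunct2, THEN conjunct2, THEN conjunct2, THEN conjunct2, THEN conjunct2, THEN conjunct2, THEN conjunct1]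
lemmas B13 = BB[THEN conjunct2, THEN conjunct2, THEN conjunct2, THEN conjunct2, THEN conjunct2, THEN conjunct2, THEN conjunct2, THEN conjunct2, THEN conjunct2, THEN conjunct2, THEN conjunct2, THEN conjunct2, THEN conjunct1]
lemmas B14 = BB[THEN conjunct2, THEN conjunct2, THEN conjunct2, THEN conjunct2, THEN conjunct2, THEN conjunct2, THEN conjunct2, THEN conjunct2, THEN conjunct2, THEN conjunct2, THEN conjunct2, THEN conjunct2, THEN conjunct2, THEN conjunct1]
lemmas B15 = BB[THEN conjunct2, THEN conjunct2, THEN conjunct2, THEN conjunct2, THEN conjunct2, THEN conjunct2, THEN conjunct2, THEN conjunct2, THEN conjunct2, THEN conjunct2, THEN conjunct2, THEN conjunct2, THEN conjunct2, THEN conjunct2, THEN conjunct1]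
lemmas B16 = BB[THEN conjunct2, THEN conjunct2, THEN conjunct2, THEN conjunct2, THEN conjunct2, THEN conjunct2, THEN conjunct2, THEN conjunct2, THEN conjunct2, THEN conjunct2, THEN conjunct2, THEN conjunct2, THEN conjunct2, THEN conjunct2, THEN conjunct2, THEN conjunct1]
lemmas B17 = BB[THEN conjunct2, THEN conjunct2, THEN conjunct2, THEN conjunct2, THEN conjunct2, THEN conjunct2, THEN conjunct2, THEN conjunct2, THEN conjunct2, THEN conjunct2, THEN conjunct2, THEN conjunct2, THEN conjunct2, THEN conjunct2, THEN conjunct2, THEN conjunct2, THEN conjunct1]
lemmas B18 = BB[THEN conjunct2, THEN conjunct2, THEN conjunct2, THEN conjunct2, THEN conjunct2, THEN conjunct2, THEN conjunct2, THEN conjunct2, THEN conjunct2, THEN conjunct2, THEN conjunct2, THEN conjunct2, THEN conjunct2, THEN conjunct2, THEN conjunct2, THEN conjunct2, THEN conjunct2, THEN conjunct1]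
lemmas B19 = BB[THEN conjunct2, THEN conjunct2, THEN conjunct2, THEN conjunct2, THEN conjunct2, THEN conjunct2, THEN conjunct2, THEN conjunct2, THEN conjunct2, THEN conjunct2, THEN conjunct2, THEN conjunct2, THEN conjunct2, THEN conjunct2, THEN conjunct2, THEN conjunct2, THEN conjunct2, THEN conjunct2, THEN conjunct1]
lemmas B20 = BB[THEN conjunct2, THEN conjunct2, THEN conjunct2, THEN conjunct2, THEN conjunct2, THEN conjunct2, THEN conjunct2, THEN conjunct2, THEN conjunct2, THEN conjunct2, THEN conjunct2, THEN conjunct2, THEN conjunct2, THEN conjunct2, THEN conjunct2, THEN conjunct2, THEN conjunct2, THEN conjunct2, THEN conjunct2, THEN conjunct1]
lemmas B21 = BB[THEN conjunct2, THEN conjunct2, THEN conjunct2, THEN conjunct2, THEN conjunct2, THEN conjunct2, THEN conjunct2, THEN conjunct2, THEN conjunct2, THEN conjunct2, THEN conjunct2, THEN conjunct2, THEN conjunct2, THEN conjunct2, THEN conjunct2, THEN conjunct2, THEN conjunct2, THEN conjunct2, THEN conjunct2, THEN conjunct2, THEN conjunct1]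
lemmas B22 = BB[THEN conjunct2, THEN conjunct2, THEN conjunct2, THEN conjunct2, THEN conjunct2, THEN conjunct2, THEN conjunct2, THEN conjunct2, THEN conjunct2, THEN conjunct2, THEN conjunct2, THEN conjunct2, THEN conjunct2, THEN conjunct2, THEN conjunct2, THEN conjunct2, THEN conjunct2, THEN conjunct2, THEN conjunct2, THEN conjunct2, THEN conjunct2, THEN conjunct1]
lemmas B23 = BB[THEN conjunct2, THEN conjunct2, THEN conjunct2, THEN conjunct2, THEN conjunct2, THEN conjunct2, THEN conjunct2, THEN conjunct2, THEN conjunct2, THEN conjunct2, THEN conjunct2, THEN conjunct2, THEN conjunct2, THEN conjunct2, THEN conjunct2, THEN conjunct2, THEN conjunct2, THEN conjunct2, THEN conjunct2, THEN conjunct2, THEN conjunct2, THEN conjunct2, THEN conjunct1]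
lemmas B24 = BB[THEN conjunct2, THEN conjunct2, THEN conjunct2, THEN conjunct2, THEN conjunct2, THEN conjunct2, THEN conjunct2, THEN conjunct2, THEN conjunct2, THEN conjunct2, THEN conjunct2, THEN conjunct2, THEN conjunct2, THEN conjunct2, THEN conjunct2, THEN conjunct2, THEN conjunct2, THEN conjunct2, THEN conjunct2, THEN conjunct2, THEN conjunct2, THEN conjunct2, THEN conjunct2, THEN conjunct1]
lemmas B25 = BB[THEN conjunct2, THEN conjunct2, THEN conjunct2, THEN conjunct2, THEN conjunct2, THEN conjunct2, THEN conjunct2, THEN conjunct2, THEN conjunct2, THEN conjunct2, THEN conjunct2, THEN conjunct2, THEN conjunct2, THEN conjunct2, THEN conjunct2, THEN conjunct2, THEN conjunct2, THEN conjunct2, THEN conjunct2, THEN conjunct2, THEN conjunct2, THEN conjunct2, THEN conjunct2, THEN conjunct2, THEN conjunct1]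
lemmas B26 = BB[THEN conjunct2, THEN conjunct2, THEN conjunct2, THEN conjunct2, THEN conjunct2, THEN conjunct2, THEN conjunct2, THEN conjunct2, THEN conjunct2, THEN conjunct2, THEN conjunct2, THEN conjunct2, THEN conjunct2, THEN conjunct2, THEN conjunct2, THEN conjunct2, THEN conjunct2, THEN conjunct2, THEN conjunct2, THEN conjunct2, THEN conjunct2, THEN conjunct2, THEN conjunct2, THEN conjunct2, THEN conjunct2, THEN conjunct1]
lemmas B27 = BB[THEN conjunct2, THEN conjunct2, THEN conjunct2, THEN conjunct2, THEN conjunct2, THEN conjunct2, THEN conjunct2, THEN conjunct2, THEN conjunct2, THEN conjunct2, THEN conjunct2, THEN conjunct2, THEN conjunct2, THEN conjunct2, THEN conjunct2, THEN conjunct2, THEN conjunct2, THEN conjunct2, THEN conjunct2, THEN conjunct2, THEN conjunct2, THEN conjunct2, THEN conjunct2, THEN conjunct2, THEN conjunct2, THEN conjunct2, THEN conjunct1]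
lemmas B28 = BB[THEN conjunct2, THEN conjunct2, THEN conjunct2, THEN conjunct2, THEN conjunct2, THEN conjunct2, THEN conjunct2, THEN conjunct2, THEN conjunct2, THEN conjunct2, THEN conjunct2, THEN conjunct2, THEN conjunct2, THEN conjunct2, THEN conjunct2, THEN conjunct2, THEN conjunct2, THEN conjunct2, THEN conjunct2, THEN conjunct2, THEN conjunct2, THEN conjunct2, THEN conjunct2, THEN conjunct2, THEN conjunct2, THEN conjunct2, THEN conjunct2]
lemmas M01 = MB[THEN conjunct1]
lemmas M02 = MB[THEN conjunct2, THEN conjunct1]
lemmas M03 = MB[THEN conjunct2, THEN conjunct2, THEN conjunct1]
lemmas M04 = MB[THEN conjunct2, THEN conjunct2, THEN conjunct2, THEN conjunct1]
lemmas M05 = MB[THEN conjunct2, THEN conjunct2, THEN conjunct2, THEN conjunct2, THEN conjunct1]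
lemmas M06 = MB[THEN conjunct2, THEN conjunct2, THEN conjunct2, THEN conjunct2, THEN conjunct2, THEN conjunct1]
lemmas M07 = MB[THEN conjunct2, THEN conjunct2, THEN conjunct2, THEN conjunct2, THEN conjunct2, THEN conjunct2, THEN conjunct1]
lemmas M08 = MB[THEN conjunct2, THEN conjunct2, THEN conjunct2, THEN conjunct2, THEN conjunct2, THEN conjunct2, THEN conjunct2, THEN conjunct1]
lemmas M09 = MB[THEN conjunct2, THEN conjunct2, THEN conjunct2, THEN conjunct2, THEN conjunct2, THEN conjunct2, THEN conjunct2, THEN conjunct2]
lemmas MC = M01[unfolded c_bimonad_def]
lemmas C01 = MC[THEN conjunct1]
lemmas C02 = MC[THEN conjunct2, THEN conjunct1]
lemmas C03 = MC[THEN conjunct2, THEN conjunct2, THEN conjunct1]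
lemmas C04 = MC[THEN conjunct2, THEN conjunct2, THEN conjunct2, THEN conjunct1]
lemmas C05 = MC[THEN conjunct2, THEN conjunct2, THEN conjunct2, THEN conjunct2, THEN conjunct1]
lemmas C06 = MC[THEN conjunct2, THEN conjunct2, THEN conjunct2, THEN conjunct2, THEN conjunct2, THEN conjunct1]
lemmas C07 = MC[THEN conjunct2, THEN conjunct2, THEN conjunct2, THEN conjunct2, THEN conjunct2, THEN conjunct2, THEN conjunct1]
lemmas C08 = MC[THEN conjunct2, THEN conjunct2, THEN conjunct2, THEN conjunct2, THEN conjunct2, THEN conjunct2, THEN conjunct2, THEN conjunct1]
lemmas C09 = MC[THEN conjunct2, THEN conjunct2, THEN conjunct2, THEN conjunct2, THEN conjunct2, THEN conjunct2, THEN conjunct2, THEN conjunct2, THEN conjunct1]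
lemmas C10 = MC[THEN conjunct2, THEN conjunct2, THEN conjunct2, THEN conjunct2, THEN conjunct2, THEN conjunct2, THEN conjunct2, THEN conjunct2, THEN conjunct2, THEN conjunct1]
lemmas C11 = MC[THEN conjunct2, THEN conjunct2, THEN conjunct2, THEN conjunct2, THEN conjunct2, THEN conjunct2, THEN conjunct2, THEN conjunct2, THEN conjunct2, THEN conjunct2, THEN conjunct1]
lemmas C12 = MC[THEN conjunct2, THEN conjunct2, THEN conjunct2, THEN conjunct2, THEN conjunct2, THEN conjunct2, THEN conjunct2, THEN conjunct2, THEN conjunct2, THEN conjunct2, THEN conjunct2, THEN conjunct1]
lemmas C13 = MC[THEN conjunct2, THEN conjunct2, THEN conjunct2, THEN conjunct2, THEN conjunct2, THEN conjunct2, THEN conjunct2, THEN conjunct2, THEN conjunct2, THEN conjunct2, THEN conjunct2, THEN conjunct2, THEN conjunct1]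
lemmas C14 = MC[THEN conjunct2, THEN conjunct2, THEN conjunct2, THEN conjunct2, THEN conjunct2, THEN conjunct2, THEN conjunct2, THEN conjunct2, THEN conjunct2, THEN conjunct2, THEN conjunct2, THEN conjunct2, THEN conjunct2, THEN conjunct1]
lemmas C15 = MC[THEN conjunct2, THEN conjunct2, THEN conjunct2, THEN conjunct2, THEN conjunct2, THEN conjunct2, THEN conjunct2, THEN conjunct2, THEN conjunct2, THEN conjunct2, THEN conjunct2, THEN conjunct2, THEN conjunct2, THEN conjunct2, THEN conjunct1]
lemmas C16 = MC[THEN conjunct2, THEN conjunct2, THEN conjunct2, THEN conjunct2, THEN conjunct2, THEN conjunct2, THEN conjunct2, THEN conjunct2, THEN conjunct2, THEN conjunct2, THEN conjunct2, THEN conjunct2, THEN conjunct2, THEN conjunct2, THEN conjunct2, THEN conjunct1]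
lemmas C17 = MC[THEN conjunct2, THEN conjunct2, THEN conjunct2, THEN conjunct2, THEN conjunct2, THEN conjunct2, THEN conjunct2, THEN conjunct2, THEN conjunct2, THEN conjunct2, THEN conjunct2, THEN conjunct2, THEN conjunct2, THEN conjunct2, THEN conjunct2, THEN conjunct2, THEN conjunct1]
lemmas C18 = MC[THEN conjunct2, THEN conjunct2, THEN conjunct2, THEN conjunct2, THEN conjunct2, THEN conjunct2, THEN conjunct2, THEN conjunct2, THEN conjunct2, THEN conjunct2, THEN conjunct2, THEN conjunct2, THEN conjunct2, THEN conjunct2, THEN conjunct2, THEN conjunct2, THEN conjunct2, THEN conjunct1]
lemmas C19 = MC[THEN conjunct2, THEN conjunct2, THEN conjunct2, THEN conjunct2, THEN conjunct2, THEN conjunct2, THEN conjunct2, THEN conjunct2, THEN conjunct2, THEN conjunct2, THEN conjunct2, THEN conjunct2, THEN conjunct2, THEN conjunct2, THEN conjunct2, THEN conjunct2, THEN conjunct2, THEN conjunct2, THEN conjunct1]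
lemmas C20 = MC[THEN conjunct2, THEN conjunct2, THEN conjunct2, THEN conjunct2, THEN conjunct2, THEN conjunct2, THEN conjunct2, THEN conjunct2, THEN conjunct2, THEN conjunct2, THEN conjunct2, THEN conjunct2, THEN conjunct2, THEN conjunct2, THEN conjunct2, THEN conjunct2, THEN conjunct2, THEN conjunct2, THEN conjunct2, THEN conjunct1]
lemmas C21 = MC[THEN conjunct2, THEN conjunct2, THEN conjunct2, THEN conjunct2, THEN conjunct2, THEN conjunct2, THEN conjunct2, THEN conjunct2, THEN conjunct2, THEN conjunct2, THEN conjunct2, THEN conjunct2, THEN conjunct2, THEN conjunct2, THEN conjunct2, THEN conjunct2, THEN conjunct2, THEN conjunct2, THEN conjunct2, THEN conjunct2, THEN conjunct1]
lemmas C22 = MC[THEN conjunct2, THEN conjunct2, THEN conjunct2, THEN conjunct2, THEN conjunct2, THEN conjunct2, THEN conjunct2, THEN conjunct2, THEN conjunct2, THEN conjunct2, THEN conjunct2, THEN conjunct2, THEN conjunct2, THEN conjunct2, THEN conjunct2, THEN conjunct2, THEN conjunct2, THEN conjunct2, THEN conjunct2, THEN conjunct2, THEN conjunct2, THEN conjunct1]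
lemmas C23 = MC[THEN conjunct2, THEN conjunct2, THEN conjunct2, THEN conjunct2, THEN conjunct2, THEN conjunct2, THEN conjunct2, THEN conjunct2, THEN conjunct2, THEN conjunct2, THEN conjunct2, THEN conjunct2, THEN conjunct2, THEN conjunct2, THEN conjunct2, THEN conjunct2, THEN conjunct2, THEN conjunct2, THEN conjunct2, THEN conjunct2, THEN conjunct2, THEN conjunct2]

lemma F0_ob[simp]: "X \<in> ob K \<Longrightarrow> F0 X \<in> ob K'" using B01 by blast
lemma F1_arr: "f \<in> ar K \<Longrightarrow> arr1 K' (F1 f) (F0 (src1 K f)) (F0 (trg1 K f))"
  using B02[rule_format, of f "src1 K f" "trg1 K f"] by (simp add: arr1_def)
lemma F1_ar[simp]: "f \<in> ar K \<Longrightarrow> F1 f \<in> ar K'" using F1_arr arr1_def by metis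
lemma F1_src[simp]: "f \<in> ar K \<Longrightarrow> src1 K' (F1 f) = F0 (src1 K f)" using F1_arr arr1_def by metis
lemma F1_trg[simp]: "f \<in> ar K \<Longrightarrow> trg1 K' (F1 f) = F0 (trg1 K f)" using F1_arr arr1_def by metis
lemma F2_cell: "\<alpha> \<in> cl K \<Longrightarrow> cell K' (F2 \<alpha>) (F1 (dom2 K \<alpha>)) (F1 (cod2 K \<alpha>))"
  using B03[rule_format, of \<alpha> "dom2 K \<alpha>" "cod2 K \<alpha>"] by (simp add: cell_def)
lemma F2_cl[simp]: "\<alpha> \<in> cl K \<Longrightarrow> F2 \<alpha> \<in> cl K'" using F2_cell cell_def by metis
lemma F2_dom[simp]: "\<alpha> \<in> cl K \<Longrightarrow> dom2 K' (F2 \<alpha>) = F1 (dom2 K \<alpha>)" using F2_cell cell_def by metis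
lemma F2_cod[simp]: "\<alpha> \<in> cl K \<Longrightarrow> cod2 K' (F2 \<alpha>) = F1 (cod2 K \<alpha>)" using F2_cell cell_def by metis
lemma F2_idc[simp]: "f \<in> ar K \<Longrightarrow> F2 (idc K f) = idc K' (F1 f)" using B04 by blast
lemma F2_v[simp]: "\<alpha> \<in> cl K \<Longrightarrow> \<beta> \<in> cl K \<Longrightarrow> cod2 K \<alpha> = dom2 K \<beta> \<Longrightarrow> F2 (vcmp K \<beta> \<alpha>) = vcmp K' (F2 \<beta>) (F2 \<alpha>)"
  using B05[rule_format, of \<alpha> "dom2 K \<alpha>" "cod2 K \<alpha>" \<beta> "cod2 K \<beta>"] by (simp add: cell_def)

lemma L2_cell: "f \<in> ar K \<Longrightarrow> g \<in> ar K \<Longrightarrow> trg1 K f = src1 K g \<Longrightarrow> cell K' (L2 g f) (cmp1 K' (F1 g) (F1 f)) (F1 (cmp1 K g f))"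
  using B06[rule_format, of f "src1 K f" "trg1 K f" g "trg1 K g"] by (simp add: arr1_def)
lemma L2_cl[simp]: "f \<in> ar K \<Longrightarrow> g \<in> ar K \<Longrightarrow> trg1 K f = src1 K g \<Longrightarrow> L2 g f \<in> cl K'" using L2_cell cell_def by metis
lemma L2_dom[simp]: "f \<in> ar K \<Longrightarrow> g \<in> ar K \<Longrightarrow> trg1 K f = src1 K g \<Longrightarrow> dom2 K' (L2 g f) = cmp1 K' (F1 g) (F1 f)" using L2_cell cell_def by metis
lemma L2_cod[simp]: "f \<in> ar K \<Longrightarrow> g \<in> ar K \<Longrightarrow> trg1 K f = src1 K g \<Longrightarrow> cod2 K' (L2 g f) = F1 (cmp1 K g f)" using L2_cell cell_def by metis
lemma C2_cell: "f \<in> ar K \<Longrightarrow> g \<in> ar K \<Longrightarrow> trg1 K f = src1 K g \<Longrightarrow> cell K' (C2 g f) (F1 (cmp1 K g f)) (cmp1 K' (F1 g) (F1 f))"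
  using B11[rule_format, of f "src1 K f" "trg1 K f" g "trg1 K g"] by (simp add: arr1_def)
lemma C2_cl[simp]: "f \<in> ar K \<Longrightarrow> g \<in> ar K \<Longrightarrow> trg1 K f = src1 K g \<Longrightarrow> C2 g f \<in> cl K'" using C2_cell cell_def by metis
lemma C2_dom[simp]: "f \<in> ar K \<Longrightarrow> g \<in> ar K \<Longrightarrow> trg1 K f = src1 K g \<Longrightarrow> dom2 K' (C2 g f) = F1 (cmp1 K g f)" using C2_cell cell_def by metis
lemma C2_cod[simp]: "f \<in> ar K \<Longrightarrow> g \<in> ar K \<Longrightarrow> trg1 K f = src1 K g \<Longrightarrow> cod2 K' (C2 g f) = cmp1 K' (F1 g) (F1 f)" using C2_cell cell_def by metis
lemma L0_cell: "X \<in> ob K \<Longrightarrow> cell K' (L0 X) (idn1 K' (F0 X)) (F1 (idn1 K X))" using B07 by blast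
lemma L0_cl[simp]: "X \<in> ob K \<Longrightarrow> L0 X \<in> cl K'" using L0_cell cell_def by metis
lemma L0_dom[simp]: "X \<in> ob K \<Longrightarrow> dom2 K' (L0 X) = idn1 K' (F0 X)" using L0_cell cell_def by metis
lemma L0_cod[simp]: "X \<in> ob K \<Longrightarrow> cod2 K' (L0 X) = F1 (idn1 K X)" using L0_cell cell_def by metis
lemma C0_cell: "X \<in> ob K \<Longrightarrow> cell K' (C0 X) (F1 (idn1 K X)) (idn1 K' (F0 X))" using B12 by blast
lemma C0_cl[simp]: "X \<in> ob K \<Longrightarrow> C0 X \<in> cl K'" using C0_cell cell_def by metis
lemma C0_dom[simp]: "X \<in> ob K \<Longrightarrow> dom2 K' (C0 X) = F1 (idn1 K X)" using C0_cell cell_def by metis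
lemma C0_cod[simp]: "X \<in> ob K \<Longrightarrow> cod2 K' (C0 X) = idn1 K' (F0 X)" using C0_cell cell_def by metis
lemma nu_cell: "f \<in> ar K \<Longrightarrow> g \<in> ar K \<Longrightarrow> trg1 K f = src1 K f \<Longrightarrow> src1 K g = src1 K f \<Longrightarrow> trg1 K g = src1 K f \<Longrightarrow>
   cell K' (\<nu> f g) (cmp1 K' (F1 f) (F1 g)) (cmp1 K' (F1 g) (F1 f))"
  using B16[rule_format, of f "src1 K f" g] by (simp add: arr1_def)
lemma nu_cl[simp]: "f \<in> ar K \<Longrightarrow> g \<in> ar K \<Longrightarrow> trg1 K f = src1 K f \<Longrightarrow> src1 K g = src1 K f \<Longrightarrow> trg1 K g = src1 K f \<Longrightarrow> \<nu> f g \<in> cl K'"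
  using nu_cell cell_def by metis
lemma nu_dom[simp]: "f \<in> ar K \<Longrightarrow> g \<in> ar K \<Longrightarrow> trg1 K f = src1 K f \<Longrightarrow> src1 K g = src1 K f \<Longrightarrow> trg1 K g = src1 K f \<Longrightarrow> dom2 K' (\<nu> f g) = cmp1 K' (F1 f) (F1 g)"
  using nu_cell cell_def by metis
lemma nu_cod[simp]: "f \<in> ar K \<Longrightarrow> g \<in> ar K \<Longrightarrow> trg1 K f = src1 K f \<Longrightarrow> src1 K g = src1 K f \<Longrightarrow> trg1 K g = src1 K f \<Longrightarrow> cod2 K' (\<nu> f g) = cmp1 K' (F1 g) (F1 f)"
  using nu_cell cell_def by metis

lemma b_arr: "arr1 K b A A" using C01 .
lemma b_ar[simp]: "b \<in> ar K" and b_src[simp]: "src1 K b = A" and b_trg[simp]: "trg1 K b = A" and A_ob[simp]: "A \<in> ob K"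
  using b_arr by (auto simp: arr1_def)
lemma x_arr: "arr1 K x A B" using M02 .
lemma x_ar[simp]: "x \<in> ar K" and x_src[simp]: "src1 K x = A" and x_trg[simp]: "trg1 K x = B" and B_ob[simp]: "B \<in> ob K"
  using x_arr by (auto simp: arr1_def)
lemma mu_cl[simp]: "\<mu> \<in> cl K" and mu_dom[simp]: "dom2 K \<mu> = cmp1 K b b" and mu_cod[simp]: "cod2 K \<mu> = b"
  using C02 by (auto simp: cell_def)
lemma eta_cl[simp]: "\<eta> \<in> cl K" and eta_dom[simp]: "dom2 K \<eta> = idn1 K A" and eta_cod[simp]: "cod2 K \<eta> = b"
  using C03 by (auto simp: cell_def)
lemma Delta_cl[simp]: "\<Delta> \<in> cl K" and Delta_dom[simp]: "dom2 K \<Delta> = b" and Delta_cod[simp]: "cod2 K \<Delta> = cmp1 K b b"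
  using C04 by (auto simp: cell_def)
lemma eps_cl[simp]: "\<epsilon> \<in> cl K" and eps_dom[simp]: "dom2 K \<epsilon> = b" and eps_cod[simp]: "cod2 K \<epsilon> = idn1 K A"
  using C05 by (auto simp: cell_def)
lemma act_cl[simp]: "act \<in> cl K" and act_dom[simp]: "dom2 K act = cmp1 K x b" and act_cod[simp]: "cod2 K act = x"
  using M03 by (auto simp: cell_def)
lemma coact_cl[simp]: "coact \<in> cl K" and coact_dom[simp]: "dom2 K coact = x" and coact_cod[simp]: "cod2 K coact = cmp1 K x b"
  using M04 by (auto simp: cell_def)
lemma cbb_cell: "cell K (c b b) (cmp1 K b b) (cmp1 K b b)"
  using YB b_arr unfolding yb_operator_def by blast
lemma cbb_cl[simp]: "c b b \<in> cl K" and cbb_dom[simp]: "dom2 K (c b b) = cmp1 K b b" and cbb_cod[simp]: "cod2 K (c b b) = cmp1 K b b"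
  using cbb_cell by (auto simp: cell_def)
lemma cp_bb[simp]: "c' (F1 b) (F1 b) = \<nu> b b" using CP b_arr unfolding yb_compatible_def by metis


abbreviation (input) V where "V \<equiv> vcmp K'"
abbreviation (input) H where "H \<equiv> hcmp K'"
abbreviation (input) I where "I f \<equiv> idc K' (F1 f)"
abbreviation (input) bb where "bb \<equiv> cmp1 K b b"
abbreviation (input) xb where "xb \<equiv> cmp1 K x b"
abbreviation (input) iA where "iA \<equiv> idn1 K A"

lemma ln1: "V (L2 b b) (H (F2 \<mu>) (I b)) = V (F2 (hcmp K \<mu> (idc K b))) (L2 bb b)"
  using B08[rule_format, where \<alpha>="idc K b" and \<beta>=\<mu> and f=b and f'=b and g=bb and g'=b and A=A and B=A and C=A] by (simp add: cell_def arr1_def)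
lemma ln2: "V (L2 b b) (H (I b) (F2 \<mu>)) = V (F2 (hcmp K (idc K b) \<mu>)) (L2 b bb)"
  using B08[rule_format, where \<alpha>=\<mu> and \<beta>="idc K b" and f=bb and f'=b and g=b and g'=b and A=A and B=A and C=A] by (simp add: cell_def arr1_def)
lemma ln3: "V (L2 b b) (H (F2 \<eta>) (I b)) = V (F2 (hcmp K \<eta> (idc K b))) (L2 iA b)"
  using B08[rule_format, where \<alpha>="idc K b" and \<beta>=\<eta> and f=b and f'=b and g=iA and g'=b and A=A and B=A and C=A] by (simp add: cell_def arr1_def)
lemma ln4: "V (L2 b b) (H (I b) (F2 \<eta>)) = V (F2 (hcmp K (idc K b) \<eta>)) (L2 b iA)"
  using B08[rule_format, where \<alpha>=\<eta> and \<beta>="idc K b" and f=iA and f'=b and g=b and g'=b and A=A and B=A and C=A] by (simp add: cell_def arr1_def)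
lemma ln5: "V (L2 iA iA) (H (F2 \<epsilon>) (F2 \<epsilon>)) = V (F2 (hcmp K \<epsilon> \<epsilon>)) (L2 b b)"
  using B08[rule_format, where \<alpha>=\<epsilon> and \<beta>=\<epsilon> and f=b and f'=iA and g=b and g'=iA and A=A and B=A and C=A] by (simp add: cell_def arr1_def)
lemma ln6: "V (L2 bb bb) (H (F2 \<Delta>) (F2 \<Delta>)) = V (F2 (hcmp K \<Delta> \<Delta>)) (L2 b b)"
  using B08[rule_format, where \<alpha>=\<Delta> and \<beta>=\<Delta> and f=b and f'=bb and g=b and g'=bb and A=A and B=A and C=A] by (simp add: cell_def arr1_def)
lemma ln7: "V (L2 x b) (H (F2 act) (I b)) = V (F2 (hcmp K act (idc K b))) (L2 xb b)"
  using B08[rule_format, where \<alpha>="idc K b" and \<beta>=act and f=b and f'=b and g=xb and g'=x and A=A and B=A and C=B] by (simp add: cell_def arr1_def)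
lemma ln8: "V (L2 x b) (H (I x) (F2 \<mu>)) = V (F2 (hcmp K (idc K x) \<mu>)) (L2 x bb)"
  using B08[rule_format, where \<alpha>=\<mu> and \<beta>="idc K x" and f=bb and f'=b and g=x and g'=x and A=A and B=A and C=B] by (simp add: cell_def arr1_def)
lemma ln9: "V (L2 x b) (H (I x) (F2 \<eta>)) = V (F2 (hcmp K (idc K x) \<eta>)) (L2 x iA)"
  using B08[rule_format, where \<alpha>=\<eta> and \<beta>="idc K x" and f=iA and f'=b and g=x and g'=x and A=A and B=A and C=B] by (simp add: cell_def arr1_def)
lemma ln10: "V (L2 xb bb) (H (F2 coact) (F2 \<Delta>)) = V (F2 (hcmp K coact \<Delta>)) (L2 x b)"
  using B08[rule_format, where \<alpha>=\<Delta> and \<beta>=coact and f=b and f'=bb and g=x and g'=xb and A=A and B=A and C=B] by (simp add: cell_def arr1_def)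

lemma la1: "V (L2 bb b) (H (L2 b b) (I b)) = V (L2 b bb) (H (I b) (L2 b b))"
  using B09[rule_format, where f=b and A=A and B=A and g=b and C=A and h=b and D=A] by (simp add: arr1_def)
lemma la2: "V (L2 xb b) (H (L2 x b) (I b)) = V (L2 x bb) (H (I x) (L2 b b))"
  using B09[rule_format, where f=b and A=A and B=A and g=b and C=A and h=x and D=B] by (simp add: arr1_def)
lemma lu1: "V (L2 b iA) (H (I b) (L0 A)) = I b" "V (L2 iA b) (H (L0 A) (I b)) = I b"
  using B10[rule_format, where f=b and A=A and B=A] by (simp_all add: arr1_def)
lemma lu2: "V (L2 x iA) (H (I x) (L0 A)) = I x"
  using B10[rule_format, where f=x and A=A and B=B] by (simp_all add: arr1_def)

lemma cn1: "V (H (F2 \<Delta>) (I b)) (C2 b b) = V (C2 bb b) (F2 (hcmp K \<Delta> (idc K b)))"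
  using B13[rule_format, where \<alpha>="idc K b" and \<beta>=\<Delta> and f=b and f'=b and g=b and g'=bb and A=A and B=A and C=A] by (simp add: cell_def arr1_def)
lemma cn2: "V (H (I b) (F2 \<Delta>)) (C2 b b) = V (C2 b bb) (F2 (hcmp K (idc K b) \<Delta>))"
  using B13[rule_format, where \<alpha>=\<Delta> and \<beta>="idc K b" and f=b and f'=bb and g=b and g'=b and A=A and B=A and C=A] by (simp add: cell_def arr1_def)
lemma cn3: "V (H (F2 \<epsilon>) (I b)) (C2 b b) = V (C2 iA b) (F2 (hcmp K \<epsilon> (idc K b)))"
  using B13[rule_format, where \<alpha>="idc K b" and \<beta>=\<epsilon> and f=b and f'=b and g=b and g'=iA and A=A and B=A and C=A] by (simp add: cell_def arr1_def)
lemma cn4: "V (H (I b) (F2 \<epsilon>)) (C2 b b) = V (C2 b iA) (F2 (hcmp K (idc K b) \<epsilon>))"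
  using B13[rule_format, where \<alpha>=\<epsilon> and \<beta>="idc K b" and f=b and f'=iA and g=b and g'=b and A=A and B=A and C=A] by (simp add: cell_def arr1_def)
lemma cn5: "V (H (F2 \<eta>) (F2 \<eta>)) (C2 iA iA) = V (C2 b b) (F2 (hcmp K \<eta> \<eta>))"
  using B13[rule_format, where \<alpha>=\<eta> and \<beta>=\<eta> and f=iA and f'=b and g=iA and g'=b and A=A and B=A and C=A] by (simp add: cell_def arr1_def)
lemma cn6: "V (H (F2 \<mu>) (F2 \<mu>)) (C2 bb bb) = V (C2 b b) (F2 (hcmp K \<mu> \<mu>))"
  using B13[rule_format, where \<alpha>=\<mu> and \<beta>=\<mu> and f=bb and f'=b and g=bb and g'=b and A=A and B=A and C=A] by (simp add: cell_def arr1_def)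
lemma cn7: "V (H (F2 coact) (I b)) (C2 x b) = V (C2 xb b) (F2 (hcmp K coact (idc K b)))"
  using B13[rule_format, where \<alpha>="idc K b" and \<beta>=coact and f=b and f'=b and g=x and g'=xb and A=A and B=A and C=B] by (simp add: cell_def arr1_def)
lemma cn8: "V (H (I x) (F2 \<Delta>)) (C2 x b) = V (C2 x bb) (F2 (hcmp K (idc K x) \<Delta>))"
  using B13[rule_format, where \<alpha>=\<Delta> and \<beta>="idc K x" and f=b and f'=bb and g=x and g'=x and A=A and B=A and C=B] by (simp add: cell_def arr1_def)
lemma cn9: "V (H (I x) (F2 \<epsilon>)) (C2 x b) = V (C2 x iA) (F2 (hcmp K (idc K x) \<epsilon>))"
  using B13[rule_format, where \<alpha>=\<epsilon> and \<beta>="idc K x" and f=b and f'=iA and g=x and g'=x and A=A and B=A and C=B] by (simp add: cell_def arr1_def)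
lemma cn10: "V (H (F2 act) (F2 \<mu>)) (C2 xb bb) = V (C2 x b) (F2 (hcmp K act \<mu>))"
  using B13[rule_format, where \<alpha>=\<mu> and \<beta>=act and f=bb and f'=b and g=xb and g'=x and A=A and B=A and C=B] by (simp add: cell_def arr1_def)

lemma ca1: "V (H (C2 b b) (I b)) (C2 bb b) = V (H (I b) (C2 b b)) (C2 b bb)"
  using B14[rule_format, where f=b and A=A and B=A and g=b and C=A and h=b and D=A] by (simp add: arr1_def)
lemma ca2: "V (H (C2 x b) (I b)) (C2 xb b) = V (H (I x) (C2 b b)) (C2 x bb)"
  using B14[rule_format, where f=b and A=A and B=A and g=b and C=A and h=x and D=B] by (simp add: arr1_def)
lemma cu1: "V (H (I b) (C0 A)) (C2 b iA) = I b" "V (H (C0 A) (I b)) (C2 iA b) = I b"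
  using B15[rule_format, where f=b and A=A and B=A] by (simp_all add: arr1_def)
lemma cu2: "V (H (I x) (C0 A)) (C2 x iA) = I x"
  using B15[rule_format, where f=x and A=A and B=B] by (simp_all add: arr1_def)


lemma cI: "\<alpha> \<in> cl K \<Longrightarrow> cell K \<alpha> (dom2 K \<alpha>) (cod2 K \<alpha>)" by (simp add: cell_def)
lemma bb_arr: "arr1 K bb A A" by (simp add: arr1_def)
lemma iA_arr: "arr1 K iA A A" by (simp add: arr1_def)
lemma xb_arr: "arr1 K xb A B" by (simp add: arr1_def)

lemma vn1: "V (\<nu> b b) (H (I b) (F2 \<mu>)) = V (H (F2 \<mu>) (I b)) (\<nu> b bb)"
  using B17[rule_format, OF b_arr bb_arr cI[of "idc K b", simplified] cI[of \<mu>, simplified]] by (simp add: cell_def arr1_def)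
lemma vn2: "V (\<nu> b b) (H (I b) (F2 \<eta>)) = V (H (F2 \<eta>) (I b)) (\<nu> b iA)"
  using B17[rule_format, OF b_arr iA_arr cI[of "idc K b", simplified] cI[of \<eta>, simplified]] by (simp add: cell_def arr1_def)
lemma vn3: "V (\<nu> b b) (H (F2 \<mu>) (I b)) = V (H (I b) (F2 \<mu>)) (\<nu> bb b)"
  using B17[rule_format, OF bb_arr b_arr cI[of \<mu>, simplified] cI[of "idc K b", simplified]] by (simp add: cell_def arr1_def)
lemma vn4: "V (\<nu> b b) (H (F2 \<eta>) (I b)) = V (H (I b) (F2 \<eta>)) (\<nu> iA b)"
  using B17[rule_format, OF iA_arr b_arr cI[of \<eta>, simplified] cI[of "idc K b", simplified]] by (simp add: cell_def arr1_def)
lemma vn5: "V (H (F2 \<Delta>) (I b)) (\<nu> b b) = V (\<nu> b bb) (H (I b) (F2 \<Delta>))"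
  using B17[rule_format, OF b_arr b_arr cI[of "idc K b", simplified] cI[of \<Delta>, simplified]] by (simp add: cell_def arr1_def)
lemma vn6: "V (H (F2 \<epsilon>) (I b)) (\<nu> b b) = V (\<nu> b iA) (H (I b) (F2 \<epsilon>))"
  using B17[rule_format, OF b_arr b_arr cI[of "idc K b", simplified] cI[of \<epsilon>, simplified]] by (simp add: cell_def arr1_def)
lemma vn7: "V (H (I b) (F2 \<Delta>)) (\<nu> b b) = V (\<nu> bb b) (H (F2 \<Delta>) (I b))"
  using B17[rule_format, OF b_arr b_arr cI[of \<Delta>, simplified] cI[of "idc K b", simplified]] by (simp add: cell_def arr1_def)
lemma vn8: "V (H (I b) (F2 \<epsilon>)) (\<nu> b b) = V (\<nu> iA b) (H (F2 \<epsilon>) (I b))"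
  using B17[rule_format, OF b_arr b_arr cI[of \<epsilon>, simplified] cI[of "idc K b", simplified]] by (simp add: cell_def arr1_def)

lemma vd1: "V (\<nu> b bb) (H (I b) (L2 b b)) = V (H (L2 b b) (I b)) (V (H (I b) (\<nu> b b)) (H (\<nu> b b) (I b)))"
  using B19[rule_format, OF b_arr b_arr b_arr] by (simp add: arr1_def)
lemma vd2: "V (\<nu> bb b) (H (L2 b b) (I b)) = V (H (I b) (L2 b b)) (V (H (\<nu> b b) (I b)) (H (I b) (\<nu> b b)))"
  using B20[rule_format, OF b_arr b_arr b_arr] by (simp add: arr1_def)
lemma vd3: "V (\<nu> b iA) (H (I b) (L0 A)) = H (L0 A) (I b)" "V (\<nu> iA b) (H (L0 A) (I b)) = H (I b) (L0 A)"
  using B21[rule_format, OF b_arr] by (simp_all add: arr1_def)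
lemma vd4: "V (H (C2 b b) (I b)) (\<nu> b bb) = V (H (I b) (\<nu> b b)) (V (H (\<nu> b b) (I b)) (H (I b) (C2 b b)))"
  using B22[rule_format, OF b_arr b_arr b_arr] by (simp add: arr1_def)
lemma vd5: "V (H (I b) (C2 b b)) (\<nu> bb b) = V (H (\<nu> b b) (I b)) (V (H (I b) (\<nu> b b)) (H (C2 b b) (I b)))"
  using B23[rule_format, OF b_arr b_arr b_arr] by (simp add: arr1_def)
lemma vd6: "V (H (C0 A) (I b)) (\<nu> b iA) = H (I b) (C0 A)" "V (H (I b) (C0 A)) (\<nu> iA b) = H (C0 A) (I b)"
  using B24[rule_format, OF b_arr] by (simp_all add: arr1_def)

lemma bl1: "V (H (L2 b b) (L2 b b)) (V (H (I b) (H (\<nu> b b) (I b))) (H (C2 b b) (C2 b b)))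
  = V (C2 bb bb) (V (F2 (hcmp K (idc K b) (hcmp K (c b b) (idc K b)))) (L2 bb bb))"
  using B25[rule_format, OF b_arr b_arr b_arr b_arr] by (simp add: arr1_def)
lemma bl2: "V (H (L2 x b) (L2 b b)) (V (H (I x) (H (\<nu> b b) (I b))) (H (C2 x b) (C2 b b)))
  = V (C2 xb bb) (V (F2 (hcmp K (idc K x) (hcmp K (c b b) (idc K b)))) (L2 xb bb))"
  using B25[rule_format, OF b_arr b_arr b_arr x_arr] by (simp add: arr1_def)
lemma l00: "H (L0 A) (L0 A) = V (C2 iA iA) (L0 A)" using B26[rule_format, OF A_ob] by simp
lemma c00: "H (C0 A) (C0 A) = V (C0 A) (L2 iA iA)" using B27[rule_format, OF A_ob] by simp
lemma c0l0: "V (C0 A) (L0 A) = idc K' (idn1 K' (F0 A))" using B28[rule_format, OF A_ob] by simp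


lemma fm1: "V (F2 \<mu>) (F2 (hcmp K \<mu> (idc K b))) = V (F2 \<mu>) (F2 (hcmp K (idc K b) \<mu>))"
  using arg_cong[OF C06, of F2] by simp
lemma fm2: "V (F2 \<mu>) (F2 (hcmp K \<eta> (idc K b))) = I b"
  using arg_cong[OF C07, of F2] by simp
lemma fm3: "V (F2 \<mu>) (F2 (hcmp K (idc K b) \<eta>)) = I b"
  using arg_cong[OF C08, of F2] by simp
lemma fc1: "V (F2 (hcmp K \<Delta> (idc K b))) (F2 \<Delta>) = V (F2 (hcmp K (idc K b) \<Delta>)) (F2 \<Delta>)"
  using arg_cong[OF C09, of F2] by simp
lemma fc2: "V (F2 (hcmp K \<epsilon> (idc K b))) (F2 \<Delta>) = I b"
  using arg_cong[OF C10, of F2] by simp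
lemma fc3: "V (F2 (hcmp K (idc K b) \<epsilon>)) (F2 \<Delta>) = I b"
  using arg_cong[OF C11, of F2] by simp
lemma fb1: "V (F2 (hcmp K \<mu> \<mu>)) (V (F2 (hcmp K (idc K b) (hcmp K (c b b) (idc K b)))) (F2 (hcmp K \<Delta> \<Delta>)))
   = V (F2 \<Delta>) (F2 \<mu>)"
  using arg_cong[OF C20, of F2] by simp
lemma fb2: "F2 (hcmp K \<epsilon> \<epsilon>) = V (F2 \<epsilon>) (F2 \<mu>)"
  using arg_cong[OF C21, of F2] by simp
lemma fb3: "F2 (hcmp K \<eta> \<eta>) = V (F2 \<Delta>) (F2 \<eta>)"
  using arg_cong[OF C22, of F2] by simp
lemma fb4: "V (F2 \<epsilon>) (F2 \<eta>) = I iA"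
  using arg_cong[OF C23, of F2] by simp
lemma fa1: "V (F2 act) (F2 (hcmp K act (idc K b))) = V (F2 act) (F2 (hcmp K (idc K x) \<mu>))"
  using arg_cong[OF M05, of F2] by simp
lemma fa2: "V (F2 act) (F2 (hcmp K (idc K x) \<eta>)) = I x"
  using arg_cong[OF M06, of F2] by simp
lemma fa3: "V (F2 (hcmp K coact (idc K b))) (F2 coact) = V (F2 (hcmp K (idc K x) \<Delta>)) (F2 coact)"
  using arg_cong[OF M07, of F2] by simp
lemma fa4: "V (F2 (hcmp K (idc K x) \<epsilon>)) (F2 coact) = I x"
  using arg_cong[OF M08, of F2] by simp
lemma fa5: "V (F2 (hcmp K act \<mu>)) (V (F2 (hcmp K (idc K x) (hcmp K (c b b) (idc K b)))) (F2 (hcmp K coact \<Delta>)))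
   = V (F2 coact) (F2 act)"
  using arg_cong[OF M09, of F2] by simp


lemmas RW = ln1 K'.ctx2[OF ln1] ln2 K'.ctx2[OF ln2] ln3 K'.ctx2[OF ln3] ln4 K'.ctx2[OF ln4] ln5 K'.ctx2[OF ln5] ln6 K'.ctx2[OF ln6] ln7 K'.ctx2[OF ln7] ln8 K'.ctx2[OF ln8] ln9 K'.ctx2[OF ln9] ln10 K'.ctx2[OF ln10] la1 K'.ctx2[OF la1] la2 K'.ctx2[OF la2] lu1(1) K'.ctx2[OF lu1(1)] lu1(2) K'.ctx2[OF lu1(2)] lu2 K'.ctx2[OF lu2] cn1 K'.ctx2[OF cn1] cn2 K'.ctx2[OF cn2] cn3 K'.ctx2[OF cn3] cn4 K'.ctx2[OF cn4] cn5 K'.ctx2[OF cn5] cn6 K'.ctx2[OF cn6] cn7 K'.ctx2[OF cn7] cn8 K'.ctx2[OF cn8] cn9 K'.ctx2[OF cn9] cn10 K'.ctx2[OF cn10] ca1 K'.ctx2[OF ca1] ca2 K'.ctx2[OF ca2] cu1(1) K'.ctx2[OF cu1(1)] cu1(2) K'.ctx2[OF cu1(2)] cu2 K'.ctx2[OF cu2] vn1 K'.ctx2[OF vn1] vn2 K'.ctx2[OF vn2] vn3 K'.ctx2[OF vn3] vn4 K'.ctx2[OF vn4] vn5 K'.ctx2[OF vn5] vn6 K'.ctx2[OF vn6] vn7 K'.ctx2[OF vn7] vn8 K'.ctx2[OF vn8] vd1 K'.ctx2[OF vd1] vd2 K'.ctx2[OF vd2] vd3(1) K'.ctx2[OF vd3(1)]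 vd3(2) K'.ctx2[OF vd3(2)] vd4 K'.ctx2[OF vd4] vd5 K'.ctx2[OF vd5] vd6(1) K'.ctx2[OF vd6(1)] vd6(2) K'.ctx2[OF vd6(2)] c0l0 K'.ctx2[OF c0l0] fm1 K'.ctx2[OF fm1] fm2 K'.ctx2[OF fm2] fm3 K'.ctx2[OF fm3] fc1 K'.ctx2[OF fc1] fc2 K'.ctx2[OF fc2] fc3 K'.ctx2[OF fc3] fb4 K'.ctx2[OF fb4] fa1 K'.ctx2[OF fa1] fa2 K'.ctx2[OF fa2] fa3 K'.ctx2[OF fa3] fa4 K'.ctx2[OF fa4] bl1 K'.ctx3[OF bl1] bl2 K'.ctx3[OF bl2] fb1 K'.ctx3[OF fb1] fa5 K'.ctx3[OF fa5] l00 c00 fb2 fb3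

lemma main: "right_rel_bimonad_module K' c' (F0 A) (F0 B) (F1 b) (V (F2 \<mu>) (L2 b b)) (V (F2 \<eta>) (L0 A))
   (V (C2 b b) (F2 \<Delta>)) (V (C0 A) (F2 \<epsilon>)) (F1 x) (V (F2 act) (L2 x b)) (V (C2 x b) (F2 coact))"
  unfolding right_rel_bimonad_module_def c_bimonad_def cell_def arr1_def
  apply (simp add: RW K'.interchange)
  done

end

theorem proposition4p18:
  fixes K :: "('o,'a,'c) twocat" and K' :: "('p,'b,'d) twocat"
  assumes "two_category K" and "two_category K'"
    and "yb_operator K c" and "yb_operator K' c'"
    and "bilax_functor K c K' c' F0 F1 F2 L2 L0 C2 C0 \<nu>"
    and "yb_compatible K c' F1 \<nu>"
    and "right_rel_bimonad_module K c A B b \<mu> \<eta> \<Delta> \<epsilon> x act coact"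
  shows "right_rel_bimonad_module K' c' (F0 A) (F0 B) (F1 b)
           (vcmp K' (F2 \<mu>) (L2 b b)) (vcmp K' (F2 \<eta>) (L0 A))
           (vcmp K' (C2 b b) (F2 \<Delta>)) (vcmp K' (C0 A) (F2 \<epsilon>))
           (F1 x) (vcmp K' (F2 act) (L2 x b)) (vcmp K' (C2 x b) (F2 coact))"
proof -
  interpret S K K' c c' F0 F1 F2 L2 L0 C2 C0 \<nu> A B b \<mu> \<eta> \<Delta> \<epsilon> x act coact
    by (unfold_locales) (rule assms)+
  show ?thesis by (rule main)
qed

end
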